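(* Let $A\in\mathbb{R}^{m\times n}$ with $m\ge n$ and $\operatorname{rank}(A)=n$, let $G\in\mathbb{R}^{n\times n}$ be symmetric positive definite, let $1\le l\le n$, and let $\Omega\in\mathbb{R}^{m\times l}$ have i.i.d. $N(0,1)$ entries. Define $$\widehat T:=I_n-G^{1/2}A^T\Omega(\Omega^TAGA^T\Omega)^{-1}\Omega^TAG^{1/2}$$ (well-defined almost surely). Then $\widehat T$ is an orthogonal projector almost surely and $$\mathbb{E}[\widehat T]\preceq I_n-\frac{G^{1/2}A^TAG^{1/2}}{m\,\lambda_{\max}(AGA^T)}\prec I_n .$$
   Context: $\preceq$, $\prec$ denote the Loewner order (positive semidefinite, resp. positive definite, difference). $\lambda_{\max}$ is the largest eigenvalue. *)

theory Defs
  imports "HOL-Analysis.Analysis" "HOL-Probability.Probability"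
begin

definition sym_mat :: "real^'n^'n \<Rightarrow> bool" where
  "sym_mat M \<longleftrightarrow> transpose M = M"

definition psd_mat :: "real^'n^'n \<Rightarrow> bool" where
  "psd_mat M \<longleftrightarrow> sym_mat M \<and> (\<forall>x. 0 \<le> x \<bullet> (M *v x))"

definition pd_mat :: "real^'n^'n \<Rightarrow> bool" where
  "pd_mat M \<longleftrightarrow> sym_mat M \<and> (\<forall>x. x \<noteq> 0 \<longrightarrow> 0 < x \<bullet> (M *v x))"

definition loewner_le :: "real^'n^'n \<Rightarrow> real^'n^'n \<Rightarrow> bool" where
  "loewner_le A B \<longleftrightarrow> psd_mat (B - A)"

definition loewner_less :: "real^'n^'n \<Rightarrow> real^'n^'n \<Rightarrow> bool" where
  "loewner_less A B \<longleftrightarrow> pd_mat (B - A)"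

definition mat_sqrt :: "real^'n^'n \<Rightarrow> real^'n^'n" where
  "mat_sqrt G = (THE S. psd_mat S \<and> S ** S = G)"

definition lambda_max :: "real^'n^'n \<Rightarrow> real" where
  "lambda_max M = Max {c. \<exists>v. v \<noteq> 0 \<and> M *v v = c *\<^sub>R v}"

definition orth_projector :: "real^'n^'n \<Rightarrow> bool" where
  "orth_projector P \<longleftrightarrow> P ** P = P \<and> transpose P = P"

definition mat_expectation :: "'s measure \<Rightarrow> ('s \<Rightarrow> real^'n^'m) \<Rightarrow> real^'n^'m" where
  "mat_expectation M X = (\<chi> i j. integral\<^sup>L M (\<lambda>\<omega>. X \<omega> $ i $ j))"

definition T_hat :: "real^'n^'m \<Rightarrow> real^'n^'n \<Rightarrow> real^'l^'m \<Rightarrow> real^'n^'n" where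
  "T_hat A G \<Omega> = mat 1 - mat_sqrt G ** transpose A ** \<Omega>
      ** matrix_inv (transpose \<Omega> ** A ** G ** transpose A ** \<Omega>)
      ** transpose \<Omega> ** A ** mat_sqrt G"

end

theory Submission
  imports Defs
begin

lemma inner_mat_swap:
  fixes A :: "real^'n^'m"
  shows "x \<bullet> (A *v y) = (transpose A *v x) \<bullet> y"
  by (simp add: inner_vec_def matrix_vector_mult_def transpose_def sum_distrib_left
      sum_distrib_right mult_ac) (rule sum.swap)

lemma sym_inner:
  fixes K :: "real^'n^'n"
  assumes "sym_mat K"
  shows "x \<bullet> (K *v y) = (K *v x) \<bullet> y"
  using assms inner_mat_swap[of x K y] by (simp add: sym_mat_def)

lemma quad_lin_zero:
  fixes a b :: real
  assumes "\<And>t. a * t + b * t^2 \<le> 0"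
  shows "a = 0"
proof (rule ccontr)
  assume a: "a \<noteq> 0"
  define t where "t = a / (2 * (\<bar>b\<bar> + 1))"
  have pos: "\<bar>b\<bar> + 1 > 0" by simp
  have "a * t = a^2 / (2 * (\<bar>b\<bar> + 1))" by (simp add: t_def power2_eq_square)
  moreover have "- \<bar>b\<bar> * t^2 \<le> b * t^2" by (intro mult_right_mono) auto
  moreover have "\<bar>b\<bar> * t^2 = a^2 * (\<bar>b\<bar> / (4 * (\<bar>b\<bar> + 1)^2))"
    by (simp add: t_def power_divide field_simps power2_eq_square)
  moreover have "\<bar>b\<bar> / (4 * (\<bar>b\<bar> + 1)^2) < 1 / (2 * (\<bar>b\<bar> + 1))"
  proof -
    have e: "\<bar>b\<bar> / (4 * (\<bar>b\<bar> + 1)^2) = (\<bar>b\<bar> / (2 * (\<bar>b\<bar> + 1))) * (1 / (2 * (\<bar>b\<bar> + 1)))"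
      by (simp add: power2_eq_square field_simps)
    have "\<bar>b\<bar> / (2 * (\<bar>b\<bar> + 1)) < 1" using pos by (simp add: divide_less_eq)
    then have "(\<bar>b\<bar> / (2 * (\<bar>b\<bar> + 1))) * (1 / (2 * (\<bar>b\<bar> + 1))) < 1 * (1 / (2 * (\<bar>b\<bar> + 1)))"
      by (intro mult_strict_right_mono) (use pos in auto)
    then show ?thesis unfolding e by simp
  qed
  moreover have "a^2 > 0" using a by simp
  ultimately have "a * t + b * t^2 > 0"
  proof -
    assume h: "a * t = a\<^sup>2 / (2 * (\<bar>b\<bar> + 1))" "- \<bar>b\<bar> * t\<^sup>2 \<le> b * t\<^sup>2"
      "\<bar>b\<bar> * t\<^sup>2 = a\<^sup>2 * (\<bar>b\<bar> / (4 * (\<bar>b\<bar> + 1)\<^sup>2))"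
      "\<bar>b\<bar> / (4 * (\<bar>b\<bar> + 1)\<^sup>2) < 1 / (2 * (\<bar>b\<bar> + 1))" "a^2 > 0"
    have "a\<^sup>2 * (\<bar>b\<bar> / (4 * (\<bar>b\<bar> + 1)\<^sup>2)) < a^2 * (1 / (2 * (\<bar>b\<bar> + 1)))"
      using h(4,5) by (rule mult_strict_left_mono)
    moreover have "a^2 * (1/(2*(\<bar>b\<bar>+1))) = a^2/(2*(\<bar>b\<bar>+1))" by simp
    ultimately show ?thesis using h(1,2,3) by linarith
  qed
  with assms[of t] show False by simp
qed

text \<open>Rayleigh maximizer on an invariant subspace is an eigenvector.\<close>
lemma sym_eigvec_exists:
  fixes K :: "real^'n^'n"
  assumes K: "sym_mat K" and W: "subspace W" "W \<noteq> {0}" and inv: "\<And>x. x \<in> W \<Longrightarrow> K *v x \<in> W"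
  shows "\<exists>u\<in>W. norm u = 1 \<and> (\<exists>c. K *v u = c *\<^sub>R u)"
proof -
  define f where "f x = x \<bullet> (K *v x)" for x :: "real^'n"
  let ?S = "sphere 0 1 \<inter> W"
  have cS: "compact ?S"
    by (intro compact_Int_closed) (auto simp: closed_subspace W)
  obtain w where w: "w \<in> W" "w \<noteq> 0" using W subspace_0[OF W(1)] by auto
  have "w /\<^sub>R norm w \<in> ?S" using w W by (auto simp: subspace_scale)
  hence neS: "?S \<noteq> {}" by blast
  have cf: "continuous_on ?S f" unfolding f_def
    by (intro continuous_on_inner continuous_on_id continuous_on_compose2[OF matrix_vector_mult_linear_continuous_on]) auto
  obtain u where u: "u \<in> ?S" and umax: "\<And>y. y \<in> ?S \<Longrightarrow> f y \<le> f u"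
    using continuous_attains_sup[OF cS neS cf] by blast
  define \<mu> where "\<mu> = f u"
  have nu: "norm u = 1" "u \<in> W" using u by auto
  have hom: "f z \<le> \<mu> * (z \<bullet> z)" if "z \<in> W" for z
  proof (cases "z = 0")
    case True then show ?thesis by (simp add: f_def)
  next
    case False
    have "z /\<^sub>R norm z \<in> ?S" using False that W by (auto simp: subspace_scale)
    hence "f (z /\<^sub>R norm z) \<le> \<mu>" using umax \<mu>_def by blast
    moreover have "f (z /\<^sub>R norm z) = f z / (norm z)^2"
      by (simp add: f_def matrix_vector_mult_scaleR power2_eq_square divide_inverse)
    ultimately have "f z / (norm z)^2 \<le> \<mu>" by simp
    moreover have "(norm z)^2 > 0" using False by simp
    ultimately have "f z \<le> \<mu> * (norm z)^2" by (simp add: divide_le_eq)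
    then show ?thesis by (simp add: power2_norm_eq_inner)
  qed
  have key: "u \<bullet> (K *v v) = \<mu> * (u \<bullet> v)" if v: "v \<in> W" for v
  proof -
    have "2 * (u \<bullet> (K *v v) - \<mu> * (u \<bullet> v)) * t + (v \<bullet> (K *v v) - \<mu> * (v \<bullet> v)) * t^2 \<le> 0" for t
    proof -
      have "u + t *\<^sub>R v \<in> W" using v nu W by (simp add: subspace_add subspace_scale)
      hence h: "f (u + t *\<^sub>R v) \<le> \<mu> * ((u + t *\<^sub>R v) \<bullet> (u + t *\<^sub>R v))" by (rule hom)
      have uu: "u \<bullet> u = 1" using nu by (simp add: norm_eq_1)
      have s: "v \<bullet> (K *v u) = u \<bullet> (K *v v)" using sym_inner[OF K, of v u] by (simp add: inner_commute)
      have "f (u + t *\<^sub>R v) = \<mu> + 2 * t * (u \<bullet> (K *v v)) + t^2 * (v \<bullet> (K *v v))"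
        using s by (simp add: f_def \<mu>_def matrix_vector_right_distrib matrix_vector_mult_scaleR
            inner_add_left inner_add_right algebra_simps power2_eq_square)
      moreover have "(u + t *\<^sub>R v) \<bullet> (u + t *\<^sub>R v) = 1 + 2 * t * (u \<bullet> v) + t^2 * (v \<bullet> v)"
        using uu by (simp add: inner_add_left inner_add_right inner_commute algebra_simps power2_eq_square)
      ultimately show ?thesis using h by (simp add: algebra_simps power2_eq_square)
    qed
    then have "2 * (u \<bullet> (K *v v) - \<mu> * (u \<bullet> v)) = 0" by (rule quad_lin_zero)
    then show ?thesis by simp
  qed
  define r where "r = K *v u - \<mu> *\<^sub>R u"
  have rW: "r \<in> W" unfolding r_def using inv[OF nu(2)] nu(2) W by (simp add: subspace_diff subspace_scale)
  have "r \<bullet> v = 0" if "v \<in> W" for v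
  proof -
    have "(K *v u) \<bullet> v = u \<bullet> (K *v v)" using sym_inner[OF K, of u v] by simp
    then show ?thesis using key[OF that] by (simp add: r_def inner_diff_left)
  qed
  from this[OF rW] have "r = 0" by simp
  then have "K *v u = \<mu> *\<^sub>R u" by (simp add: r_def)
  then show ?thesis using nu by blast
qed

lemma sym_spectral_sub:
  fixes K :: "real^'n^'n"
  assumes K: "sym_mat K"
  shows "subspace W \<Longrightarrow> (\<And>x. x \<in> W \<Longrightarrow> K *v x \<in> W) \<Longrightarrow>
    \<exists>B. B \<subseteq> W \<and> pairwise orthogonal B \<and> (\<forall>b\<in>B. norm b = 1 \<and> (\<exists>c. K *v b = c *\<^sub>R b)) \<and> span B = W"
proof (induction "dim W" arbitrary: W rule: less_induct)
  case less
  show ?case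
  proof (cases "W = {0}")
    case True
    then show ?thesis by (intro exI[of _ "{}"]) auto
  next
    case False
    obtain u c where u: "u \<in> W" "norm u = 1" "K *v u = c *\<^sub>R u"
      using sym_eigvec_exists[OF K less.prems(1) False less.prems(2)] by blast
    define W' where "W' = {x\<in>W. u \<bullet> x = 0}"
    have sW': "subspace W'" using less.prems(1) unfolding W'_def subspace_def
      by (auto simp: inner_add_right)
    have iW': "K *v x \<in> W'" if "x \<in> W'" for x
    proof -
      have "u \<bullet> (K *v x) = (K *v u) \<bullet> x" by (rule sym_inner[OF K])
      also have "\<dots> = c * (u \<bullet> x)" using u by simp
      finally show ?thesis using that less.prems(2) by (auto simp: W'_def)
    qed
    have uu: "u \<bullet> u = 1" using u by (simp add: norm_eq_1)
    have "span W' \<subset> span W"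
    proof -
      have "W' \<subseteq> W" by (auto simp: W'_def)
      moreover have "u \<notin> W'" using uu by (auto simp: W'_def)
      ultimately show ?thesis using u(1) sW' less.prems(1)
        by (metis psubsetI span_eq_iff)
    qed
    then have "dim W' < dim W" by (rule dim_psubset)
    from less.hyps[OF this sW' iW'] obtain B' where B': "B' \<subseteq> W'" "pairwise orthogonal B'"
      "\<forall>b\<in>B'. norm b = 1 \<and> (\<exists>c. K *v b = c *\<^sub>R b)" "span B' = W'" by blast
    have "insert u B' \<subseteq> W" using u B'(1) by (auto simp: W'_def)
    moreover have "pairwise orthogonal (insert u B')"
      using B'(1,2) by (auto simp: pairwise_insert W'_def orthogonal_def inner_commute)
    moreover have "\<forall>b\<in>insert u B'. norm b = 1 \<and> (\<exists>c. K *v b = c *\<^sub>R b)" using u B'(3) by auto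
    moreover have "span (insert u B') = W"
    proof
      show "span (insert u B') \<subseteq> W" using calculation(1) less.prems(1) by (simp add: span_minimal)
      show "W \<subseteq> span (insert u B')"
      proof
        fix x assume x: "x \<in> W"
        have "x - (u \<bullet> x) *\<^sub>R u \<in> W'" using x u(1) less.prems(1) uu
          by (auto simp: W'_def subspace_diff subspace_scale inner_diff_right)
        then show "x \<in> span (insert u B')" using B'(4) span_breakdown_eq by blast
      qed
    qed
    ultimately show ?thesis by blast
  qed
qed

lemma sym_spectral:
  fixes K :: "real^'n^'n"
  assumes K: "sym_mat K"
  obtains B where "pairwise orthogonal B" "\<And>b. b \<in> B \<Longrightarrow> norm b = 1"
    "\<And>b. b \<in> B \<Longrightarrow> \<exists>c. K *v b = c *\<^sub>R b" "span B = UNIV" "finite B"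
proof -
  obtain B where B: "pairwise orthogonal B" "\<forall>b\<in>B. norm b = 1 \<and> (\<exists>c. K *v b = c *\<^sub>R b)" "span B = UNIV"
    using sym_spectral_sub[OF K, of UNIV] by (auto simp: subspace_UNIV)
  have "0 \<notin> B" using B(2) by force
  then have "independent B" using B(1) pairwise_orthogonal_independent by blast
  then have "finite B" using independent_bound by blast
  then show ?thesis using that B by blast
qed

lemma onb_expand:
  fixes x :: "real^'n"
  assumes "pairwise orthogonal B" "\<And>b. b \<in> B \<Longrightarrow> norm b = 1" "span B = UNIV" "finite B"
  shows "x = (\<Sum>b\<in>B. (x \<bullet> b) *\<^sub>R b)"
  using orthonormal_basis_expand[of B x] assms by auto

lemma onb_inner_expand:
  fixes x y :: "real^'n"
  assumes "pairwise orthogonal B" "\<And>b. b \<in> B \<Longrightarrow> norm b = 1" "span B = UNIV" "finite B"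
  shows "x \<bullet> y = (\<Sum>b\<in>B. (x \<bullet> b) * (y \<bullet> b))"
proof -
  have "x \<bullet> y = x \<bullet> (\<Sum>b\<in>B. (y \<bullet> b) *\<^sub>R b)" using onb_expand[OF assms, of y] by simp
  also have "\<dots> = (\<Sum>b\<in>B. (x \<bullet> b) * (y \<bullet> b))" by (simp add: inner_sum_right mult.commute)
  finally show ?thesis .
qed

lemma onb_eq:
  fixes x y :: "real^'n"
  assumes "span B = UNIV" and "\<And>b. b \<in> B \<Longrightarrow> x \<bullet> b = y \<bullet> b"
  shows "x = y"
proof -
  have "(x - y) \<bullet> z = 0" for z
  proof -
    have "z \<in> span B" using assms by simp
    then show ?thesis
    proof (induction rule: span_induct_alt)
      case base then show ?case by simp
    next
      case (step c b z) then show ?case using assms(2)[of b] by (simp add: inner_add_right inner_diff_left)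
    qed
  qed
  from this[of "x - y"] show ?thesis by simp
qed

lemma onb_coeff:
  fixes f :: "real^'n \<Rightarrow> real"
  assumes "pairwise orthogonal B" "\<And>b. b \<in> B \<Longrightarrow> norm b = 1" "finite B" "b0 \<in> B"
  shows "(\<Sum>b\<in>B. f b *\<^sub>R b) \<bullet> b0 = f b0"
proof -
  have "(\<Sum>b\<in>B. f b *\<^sub>R b) \<bullet> b0 = (\<Sum>b\<in>B. f b * (b \<bullet> b0))" by (simp add: inner_sum_left)
  also have "\<dots> = (\<Sum>b\<in>B. if b = b0 then f b0 else 0)"
  proof (rule sum.cong)
    fix b assume "b \<in> B"
    then show "f b * (b \<bullet> b0) = (if b = b0 then f b0 else 0)"
      using assms(1,2,4) by (auto simp: pairwise_def orthogonal_def norm_eq_1)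
  qed simp
  also have "\<dots> = f b0" using assms(3,4) by simp
  finally show ?thesis .
qed

lemma psd_sqrt_exists:
  fixes G :: "real^'n^'n"
  assumes G: "psd_mat G"
  shows "\<exists>S. psd_mat S \<and> S ** S = G"
proof -
  have K: "sym_mat G" using G by (simp add: psd_mat_def)
  obtain B where B: "pairwise orthogonal B" "\<And>b. b \<in> B \<Longrightarrow> norm b = 1"
    "\<And>b. b \<in> B \<Longrightarrow> \<exists>c. G *v b = c *\<^sub>R b" "span B = UNIV" "finite B"
    using sym_spectral[OF K] by blast
  define ev where "ev b = b \<bullet> (G *v b)" for b
  have evb: "G *v b = ev b *\<^sub>R b" if bB: "b \<in> B" for b
  proof -
    obtain c where c: "G *v b = c *\<^sub>R b" using B(3)[OF bB] by blast
    have "b \<bullet> b = 1" using B(2)[OF bB] by (simp add: norm_eq_1)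
    then have "ev b = c" by (simp add: ev_def c)
    then show ?thesis using c by simp
  qed
  have ev0: "ev b \<ge> 0" for b using G by (simp add: psd_mat_def ev_def)
  define S :: "real^'n^'n" where "S = (\<chi> i j. \<Sum>b\<in>B. sqrt (ev b) * (b$i * b$j))"
  have Sx: "S *v x = (\<Sum>b\<in>B. (sqrt (ev b) * (b \<bullet> x)) *\<^sub>R b)" for x
    by (simp add: S_def vec_eq_iff matrix_vector_mult_def inner_vec_def sum_distrib_left
        sum_distrib_right mult_ac sum_component) (intro allI sum.swap)
  have symS: "sym_mat S" by (simp add: sym_mat_def S_def transpose_def vec_eq_iff mult.commute)
  have Sb: "(S *v x) \<bullet> b0 = sqrt (ev b0) * (b0 \<bullet> x)" if "b0 \<in> B" for x b0
    unfolding Sx by (rule onb_coeff[OF B(1,2,5) that])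
  have "x \<bullet> (S *v x) \<ge> 0" for x
  proof -
    have "x \<bullet> (S *v x) = (\<Sum>b\<in>B. (x \<bullet> b) * ((S *v x) \<bullet> b))" by (rule onb_inner_expand[OF B(1,2,4,5)])
    also have "\<dots> = (\<Sum>b\<in>B. sqrt (ev b) * (x \<bullet> b)^2)"
    proof (rule sum.cong)
      fix b assume bB: "b \<in> B"
      show "(x \<bullet> b) * ((S *v x) \<bullet> b) = sqrt (ev b) * (x \<bullet> b)^2"
        using Sb[OF bB, of x] by (simp add: power2_eq_square inner_commute[of b x])
    qed simp
    also have "\<dots> \<ge> 0" by (intro sum_nonneg mult_nonneg_nonneg) (auto simp: ev0)
    finally show ?thesis .
  qed
  then have psdS: "psd_mat S" using symS by (simp add: psd_mat_def)
  have "S ** S = G"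
  proof (subst matrix_eq, intro allI)
    fix x
    show "(S ** S) *v x = G *v x"
    proof (rule onb_eq[OF B(4)])
      fix b assume b: "b \<in> B"
      have "((S ** S) *v x) \<bullet> b = sqrt (ev b) * (b \<bullet> (S *v x))"
        by (simp add: matrix_vector_mul_assoc[symmetric] Sb[OF b])
      also have "\<dots> = ev b * (b \<bullet> x)" using Sb[OF b, of x] ev0[of b]
        by (simp add: inner_commute mult.assoc[symmetric])
      also have "\<dots> = (G *v x) \<bullet> b" using sym_inner[OF K, of x b] evb[OF b]
        by (simp add: inner_commute)
      finally show "((S ** S) *v x) \<bullet> b = (G *v x) \<bullet> b" .
    qed
  qed
  with psdS show ?thesis by blast
qed

lemma psd_sqrt_unique:
  fixes R S :: "real^'n^'n"
  assumes R: "psd_mat R" and S: "psd_mat S" and eq: "R ** R = S ** S"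
  shows "R = S"
proof -
  have KR: "sym_mat R" and KS: "sym_mat S" using R S by (auto simp: psd_mat_def)
  obtain B where B: "pairwise orthogonal B" "\<And>b. b \<in> B \<Longrightarrow> norm b = 1"
    "\<And>b. b \<in> B \<Longrightarrow> \<exists>c. R *v b = c *\<^sub>R b" "span B = UNIV" "finite B"
    using sym_spectral[OF KR] by blast
  have agree: "S *v b = R *v b" if b: "b \<in> B" for b
  proof -
    obtain r where r: "R *v b = r *\<^sub>R b" using B(3)[OF b] by blast
    have bb: "b \<bullet> b = 1" using B(2)[OF b] by (simp add: norm_eq_1)
    have "b \<bullet> (R *v b) \<ge> 0" using R by (simp add: psd_mat_def)
    then have r0: "r \<ge> 0" using r bb by simp
    have "S *v (S *v b) = (S ** S) *v b" by (simp add: matrix_vector_mul_assoc)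
    also have "\<dots> = R *v (R *v b)" by (simp add: matrix_vector_mul_assoc eq)
    also have "\<dots> = (r^2) *\<^sub>R b" using r by (simp add: matrix_vector_mult_scaleR power2_eq_square)
    finally have Gb: "S *v (S *v b) = (r^2) *\<^sub>R b" .
    show ?thesis
    proof (cases "r = 0")
      case True
      have "(S *v b) \<bullet> (S *v b) = b \<bullet> (S *v (S *v b))" using sym_inner[OF KS, of b "S *v b"] by simp
      also have "\<dots> = 0" using Gb True by simp
      finally have "S *v b = 0" by simp
      then show ?thesis using r True by simp
    next
      case False
      then have rp: "r > 0" using r0 by simp
      define y where "y = S *v b - r *\<^sub>R b"
      have "S *v y + r *\<^sub>R y = 0"
        using Gb by (simp add: y_def matrix_vector_right_distrib matrix_vector_mult_scaleR
             matrix_vector_mult_diff_distrib algebra_simps power2_eq_square)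
      then have "y \<bullet> (S *v y) + r * (y \<bullet> y) = 0"
        by (metis inner_add_right inner_scaleR_right inner_zero_right)
      moreover have "y \<bullet> (S *v y) \<ge> 0" using S by (simp add: psd_mat_def)
      ultimately have "r * (y \<bullet> y) \<le> 0" by linarith
      then have "y \<bullet> y \<le> 0" using rp by (simp add: mult_le_0_iff)
      then have "y \<bullet> y = 0" using inner_ge_zero[of y] by linarith
      then have "y = 0" by simp
      then show ?thesis using r by (simp add: y_def)
    qed
  qed
  show ?thesis
  proof (subst matrix_eq, intro allI)
    fix x
    show "R *v x = S *v x"
    proof (rule onb_eq[OF B(4)])
      fix b assume b: "b \<in> B"
      show "(R *v x) \<bullet> b = (S *v x) \<bullet> b"
        using sym_inner[OF KR, of b x] sym_inner[OF KS, of b x] agree[OF b]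
        by (simp add: inner_commute)
    qed
  qed
qed

lemma mat_sqrt_props:
  fixes G :: "real^'n^'n"
  assumes "psd_mat G"
  shows "psd_mat (mat_sqrt G) \<and> mat_sqrt G ** mat_sqrt G = G"
proof -
  obtain S where S: "psd_mat S" "S ** S = G" using psd_sqrt_exists[OF assms] by blast
  have "mat_sqrt G = S" unfolding mat_sqrt_def
    by (rule the_equality) (use S psd_sqrt_unique in auto)
  then show ?thesis using S by simp
qed

lemma lambda_max_bound:
  fixes K :: "real^'n^'n"
  assumes K: "sym_mat K"
  shows "x \<bullet> (K *v x) \<le> lambda_max K * (x \<bullet> x)"
proof -
  obtain B where B: "pairwise orthogonal B" "\<And>b. b \<in> B \<Longrightarrow> norm b = 1"
    "\<And>b. b \<in> B \<Longrightarrow> \<exists>c. K *v b = c *\<^sub>R b" "span B = UNIV" "finite B"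
    using sym_spectral[OF K] by blast
  define ev where "ev b = b \<bullet> (K *v b)" for b
  have evb: "K *v b = ev b *\<^sub>R b" if bB: "b \<in> B" for b
  proof -
    obtain c where c: "K *v b = c *\<^sub>R b" using B(3)[OF bB] by blast
    have "b \<bullet> b = 1" using B(2)[OF bB] by (simp add: norm_eq_1)
    then have "ev b = c" by (simp add: ev_def c)
    then show ?thesis using c by simp
  qed
  define E where "E = {c. \<exists>v. v \<noteq> 0 \<and> K *v v = c *\<^sub>R v}"
  have "E \<subseteq> ev ` B"
  proof
    fix c assume "c \<in> E"
    then obtain v where v: "v \<noteq> 0" "K *v v = c *\<^sub>R v" by (auto simp: E_def)
    have "\<exists>b\<in>B. v \<bullet> b \<noteq> 0"
    proof (rule ccontr)
      assume "\<not> ?thesis"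
      then have "v = 0" using onb_eq[OF B(4), of v 0] by auto
      with v show False by simp
    qed
    then obtain b where b: "b \<in> B" "v \<bullet> b \<noteq> 0" by blast
    have "c * (v \<bullet> b) = (K *v v) \<bullet> b" using v by simp
    also have "\<dots> = v \<bullet> (K *v b)" using sym_inner[OF K, of v b] by simp
    also have "\<dots> = ev b * (v \<bullet> b)" using evb[OF b(1)] by simp
    finally have "c = ev b" using b(2) by simp
    then show "c \<in> ev ` B" using b by blast
  qed
  then have finE: "finite E" using B(5) finite_subset by blast
  have evE: "ev b \<le> lambda_max K" if "b \<in> B" for b
  proof -
    have "b \<noteq> 0" using B(2)[OF that] by auto
    then have "ev b \<in> E" using evb[OF that] by (auto simp: E_def)
    then show ?thesis unfolding lambda_max_def E_def[symmetric] using finE by simp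
  qed
  have "x \<bullet> (K *v x) = (\<Sum>b\<in>B. (x \<bullet> b) * ((K *v x) \<bullet> b))" by (rule onb_inner_expand[OF B(1,2,4,5)])
  also have "\<dots> = (\<Sum>b\<in>B. ev b * (x \<bullet> b)^2)"
  proof (rule sum.cong)
    fix b assume b: "b \<in> B"
    have "(K *v x) \<bullet> b = x \<bullet> (K *v b)" using sym_inner[OF K, of x b] by simp
    then show "(x \<bullet> b) * ((K *v x) \<bullet> b) = ev b * (x \<bullet> b)^2"
      using evb[OF b] by (simp add: power2_eq_square)
  qed simp
  also have "\<dots> \<le> (\<Sum>b\<in>B. lambda_max K * (x \<bullet> b)^2)"
    by (intro sum_mono mult_right_mono evE) auto
  also have "\<dots> = lambda_max K * (x \<bullet> x)"
    using onb_inner_expand[OF B(1,2,4,5), of x x]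
    by (simp add: sum_distrib_left power2_eq_square)
  finally show ?thesis .
qed

lemma vec_meas:
  fixes f :: "'s \<Rightarrow> 'a::euclidean_space ^'n"
  assumes "\<And>i. (\<lambda>x. f x $ i) \<in> borel_measurable M"
  shows "f \<in> borel_measurable M"
proof (subst borel_measurable_euclidean_space, intro ballI)
  fix b :: "'a^'n" assume "b \<in> Basis"
  then have "b \<in> (\<Union>i. \<Union>u\<in>Basis. {axis i u})" by (simp only: Basis_vec_def)
  then obtain i c where b: "b = axis i c" "c \<in> Basis" by (elim UN_E) auto
  have "(\<lambda>x. f x $ i \<bullet> c) \<in> borel_measurable M"
    by (rule borel_measurable_inner[OF assms measurable_const]) simp
  then show "(\<lambda>x. f x \<bullet> b) \<in> borel_measurable M" by (simp add: b inner_axis)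
qed

lemma vec_nth_meas:
  fixes f :: "'s \<Rightarrow> 'a::euclidean_space ^'n"
  assumes "f \<in> borel_measurable M"
  shows "(\<lambda>x. f x $ i) \<in> borel_measurable M"
proof -
  have "continuous_on UNIV (\<lambda>x::'a^'n. x $ i)" by (intro continuous_intros)
  then have "(\<lambda>x::'a^'n. x $ i) \<in> borel_measurable borel" by (rule borel_measurable_continuous_onI)
  from measurable_compose[OF assms this] show ?thesis by simp
qed

definition em :: "'s measure \<Rightarrow> ('s \<Rightarrow> real^'b^'a) \<Rightarrow> bool" where
  "em M F \<longleftrightarrow> (\<forall>i j. (\<lambda>x. F x $ i $ j) \<in> borel_measurable M)"

lemma em_iff: "em M F \<longleftrightarrow> F \<in> borel_measurable M"
proof
  assume "em M F"
  then show "F \<in> borel_measurable M" unfolding em_def by (intro vec_meas) auto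
next
  assume "F \<in> borel_measurable M"
  then show "em M F" unfolding em_def by (auto intro!: vec_nth_meas)
qed

lemma em_mult: "em M F \<Longrightarrow> em M H \<Longrightarrow> em M (\<lambda>x. F x ** H x)"
  unfolding em_def matrix_matrix_mult_def by (auto intro!: borel_measurable_sum borel_measurable_times)

lemma em_transpose: "em M F \<Longrightarrow> em M (\<lambda>x. transpose (F x))"
  unfolding em_def transpose_def by auto

lemma em_const: "em M (\<lambda>x. C)"
  unfolding em_def by auto

lemma em_diff: "em M F \<Longrightarrow> em M H \<Longrightarrow> em M (\<lambda>x. F x - H x)"
  unfolding em_def by (auto intro!: borel_measurable_diff)

lemma em_add: "em M F \<Longrightarrow> em M H \<Longrightarrow> em M (\<lambda>x. F x + H x)"
  unfolding em_def by (auto intro!: borel_measurable_add)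

lemma det_meas: "em M F \<Longrightarrow> (\<lambda>x. det (F x)) \<in> borel_measurable M"
  unfolding em_def det_def by (auto intro!: borel_measurable_sum borel_measurable_times borel_measurable_prod)

lemma matrix_inv_props:
  fixes N :: "real^'n^'n"
  assumes "invertible N"
  shows "N ** matrix_inv N = mat 1" "matrix_inv N ** N = mat 1"
proof -
  from assms obtain A' where "N ** A' = mat 1 \<and> A' ** N = mat 1" by (auto simp: invertible_def)
  then have "N ** matrix_inv N = mat 1 \<and> matrix_inv N ** N = mat 1"
    unfolding matrix_inv_def by (rule someI)
  then show "N ** matrix_inv N = mat 1" "matrix_inv N ** N = mat 1" by auto
qed

lemma matrix_inv_noninv:
  fixes N :: "real^'n^'n"
  assumes "\<not> invertible N"
  shows "matrix_inv N = matrix_inv (mat 0 :: real^'n^'n)"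
proof -
  have "\<not> invertible (mat 0 :: real^'n^'n)" by (metis det_0 invertible_det_nz)
  then have "(\<lambda>A'. N ** A' = mat 1 \<and> A' ** N = mat 1) = (\<lambda>A'. (mat 0::real^'n^'n) ** A' = mat 1 \<and> A' ** mat 0 = mat 1)"
    using assms unfolding invertible_def by (auto simp: fun_eq_iff)
  then show ?thesis unfolding matrix_inv_def by simp
qed

lemma matrix_inv_entry:
  fixes N :: "real^'n^'n"
  shows "matrix_inv N $ i $ j = (if det N \<noteq> 0 then det (\<chi> a b. if b = i then axis j 1 $ a else N $ a $ b) / det N
     else matrix_inv (mat 0 :: real^'n^'n) $ i $ j)"
proof (cases "det N = 0")
  case True
  then show ?thesis using matrix_inv_noninv[of N] by (simp add: invertible_det_nz)
next
  case False
  then have inv: "invertible N" by (simp add: invertible_det_nz)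
  have "N *v (matrix_inv N *v axis j 1) = axis j 1"
    by (simp add: matrix_vector_mul_assoc matrix_inv_props(1)[OF inv])
  then have "matrix_inv N *v axis j 1 = (\<chi> k. det (\<chi> a b. if b = k then axis j 1 $ a else N $ a $ b) / det N)"
    using cramer[OF False] by blast
  then have "(matrix_inv N *v axis j 1) $ i = det (\<chi> a b. if b = i then axis j 1 $ a else N $ a $ b) / det N"
    by simp
  moreover have "(matrix_inv N *v axis j 1) $ i = matrix_inv N $ i $ j"
    by (simp add: matrix_vector_mult_basis column_def)
  ultimately show ?thesis using False by simp
qed

lemma em_inv:
  fixes F :: "'s \<Rightarrow> real^'n^'n"
  shows "em M F \<Longrightarrow> em M (\<lambda>x. matrix_inv (F x))"
proof -
  assume F: "em M F"
  have d: "(\<lambda>x. det (F x)) \<in> borel_measurable M" by (rule det_meas[OF F])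
  have d2: "(\<lambda>x. det (\<chi> a b. if b = i then axis j 1 $ a else F x $ a $ b)) \<in> borel_measurable M" for i j
  proof (rule det_meas, unfold em_def, intro allI)
    fix a b
    show "(\<lambda>x. (\<chi> a b. if b = i then axis j 1 $ a else F x $ a $ b) $ a $ b) \<in> borel_measurable M"
      by (cases "b = i") (use F in \<open>auto simp: em_def\<close>)
  qed
  have s: "{x \<in> space M. det (F x) \<noteq> 0} \<in> sets M" using d by measurable
  show ?thesis unfolding em_def matrix_inv_entry[of "F _"]
    by (auto intro!: measurable_If borel_measurable_divide d d2 s)
qed

lemma (in prob_space) indep_null:
  assumes ind: "indep_var N1 X N2 Y" and S: "S \<in> sets (N1 \<Otimes>\<^sub>M N2)"
    and sl: "\<And>y. y \<in> space N2 \<Longrightarrow> emeasure (distr M N1 X) ((\<lambda>x. (x, y)) -` S) = 0"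
  shows "emeasure M {\<omega>\<in>space M. (X \<omega>, Y \<omega>) \<in> S} = 0"
proof -
  have rv: "random_variable N1 X" "random_variable N2 Y"
    and eq: "distr M N1 X \<Otimes>\<^sub>M distr M N2 Y = distr M (N1 \<Otimes>\<^sub>M N2) (\<lambda>x. (X x, Y x))"
    using ind unfolding indep_var_distribution_eq by auto
  interpret X: prob_space "distr M N1 X" by (rule prob_space_distr) fact
  interpret Y: prob_space "distr M N2 Y" by (rule prob_space_distr) fact
  interpret XY: pair_prob_space "distr M N1 X" "distr M N2 Y" ..
  have XYm: "(\<lambda>x. (X x, Y x)) \<in> measurable M (N1 \<Otimes>\<^sub>M N2)" using rv by (rule measurable_Pair)
  have "{\<omega>\<in>space M. (X \<omega>, Y \<omega>) \<in> S} = (\<lambda>x. (X x, Y x)) -` S \<inter> space M" by auto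
  then have "emeasure M {\<omega>\<in>space M. (X \<omega>, Y \<omega>) \<in> S} = emeasure (distr M (N1 \<Otimes>\<^sub>M N2) (\<lambda>x. (X x, Y x))) S"
    using emeasure_distr[OF XYm S] by simp
  also have "\<dots> = emeasure (distr M N1 X \<Otimes>\<^sub>M distr M N2 Y) S" using eq by simp
  also have "\<dots> = (\<integral>\<^sup>+y. emeasure (distr M N1 X) ((\<lambda>x. (x, y)) -` S) \<partial>distr M N2 Y)"
  proof (rule XY.emeasure_pair_measure_alt2)
    have "sets (distr M N1 X \<Otimes>\<^sub>M distr M N2 Y) = sets (N1 \<Otimes>\<^sub>M N2)"
      by (rule sets_pair_measure_cong) simp_all
    then show "S \<in> sets (distr M N1 X \<Otimes>\<^sub>M distr M N2 Y)" using S by simp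
  qed
  also have "\<dots> = (\<integral>\<^sup>+y. 0 \<partial>distr M N2 Y)"
  proof (rule nn_integral_cong)
    fix y assume "y \<in> space (distr M N2 Y)"
    then have "y \<in> space N2" by simp
    then show "emeasure (distr M N1 X) ((\<lambda>x. (x, y)) -` S) = 0" by (rule sl)
  qed
  finally show ?thesis by simp
qed

definition mmask :: "('m \<times> 'l) set \<Rightarrow> real^'l^'m \<Rightarrow> real^'l^'m" where
  "mmask K X = (\<chi> i j. if (i, j) \<in> K then X $ i $ j else 0)"

lemma mmask_compl: "mmask K X + mmask (- K) X = X"
  by (simp add: mmask_def vec_eq_iff)

lemma mmask_meas: "(\<lambda>f. (\<chi> i j. if (i, j) \<in> K then f (i, j) else 0) :: real^'l^'m) \<in> measurable (PiM K (\<lambda>_. borel)) borel"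
proof (rule vec_meas, rule vec_meas)
  fix i j
  show "(\<lambda>x. ((\<chi> i j. if (i, j) \<in> K then x (i, j) else 0) :: real^'l^'m) $ i $ j) \<in> borel_measurable (PiM K (\<lambda>_. borel))"
    by (cases "(i, j) \<in> K") (auto intro!: measurable_component_singleton)
qed

locale gauss = prob_space M for M :: "'s measure" +
  fixes Om :: "'s \<Rightarrow> real^'l^'m"
  assumes ind: "indep_vars (\<lambda>_. borel) (\<lambda>(i, j) \<omega>. Om \<omega> $ i $ j) UNIV"
    and dist: "\<And>i j. distributed M lborel (\<lambda>\<omega>. Om \<omega> $ i $ j) std_normal_density"
begin

lemma ent_meas: "(\<lambda>\<omega>. Om \<omega> $ i $ j) \<in> borel_measurable M"
  using distributed_measurable[OF dist[of i j]] by simp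

lemma Om_em: "em M Om" unfolding em_def using ent_meas by auto

lemma Om_meas: "Om \<in> borel_measurable M" using em_iff[THEN iffD1, OF Om_em] .

lemma entry_null: "emeasure M {\<omega>\<in>space M. Om \<omega> $ i $ j = t} = 0"
proof -
  have "{\<omega>\<in>space M. Om \<omega> $ i $ j = t} = (\<lambda>\<omega>. Om \<omega> $ i $ j) -` {t} \<inter> space M" by auto
  then have "emeasure M {\<omega>\<in>space M. Om \<omega> $ i $ j = t} = set_nn_integral lborel {t} std_normal_density"
    using distributed_emeasure[OF dist[of i j], of "{t}"] by simp
  also have "\<dots> = 0"
  proof -
    have h: "AE x in lborel. ennreal (std_normal_density x) * indicator {t} x = 0"
      using AE_lborel_singleton[of t] by (auto elim!: eventually_mono)
    show ?thesis by (subst nn_integral_cong_AE[OF h]) simp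
  qed
  finally show ?thesis .
qed

lemma indep_masks:
  assumes "K \<inter> L = {}"
  shows "indep_var borel (\<lambda>\<omega>. mmask K (Om \<omega>)) borel (\<lambda>\<omega>. mmask L (Om \<omega>))"
proof -
  have i: "indep_var (PiM K (\<lambda>_. borel)) (\<lambda>\<omega>. restrict (\<lambda>p. (\<lambda>(i, j) \<omega>. Om \<omega> $ i $ j) p \<omega>) K)
     (PiM L (\<lambda>_. borel)) (\<lambda>\<omega>. restrict (\<lambda>p. (\<lambda>(i, j) \<omega>. Om \<omega> $ i $ j) p \<omega>) L)"
    by (rule indep_var_restrict[OF ind assms]) auto
  have c: "indep_var borel ((\<lambda>f. (\<chi> i j. if (i, j) \<in> K then f (i, j) else 0) :: real^'l^'m) \<circ> (\<lambda>\<omega>. restrict (\<lambda>p. (\<lambda>(i, j) \<omega>. Om \<omega> $ i $ j) p \<omega>) K))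
     borel ((\<lambda>f. (\<chi> i j. if (i, j) \<in> L then f (i, j) else 0) :: real^'l^'m) \<circ> (\<lambda>\<omega>. restrict (\<lambda>p. (\<lambda>(i, j) \<omega>. Om \<omega> $ i $ j) p \<omega>) L))"
    by (rule indep_var_compose[OF i mmask_meas mmask_meas])
  have e: "((\<lambda>f. (\<chi> i j. if (i, j) \<in> K' then f (i, j) else 0) :: real^'l^'m) \<circ> (\<lambda>\<omega>. restrict (\<lambda>p. (\<lambda>(i, j) \<omega>. Om \<omega> $ i $ j) p \<omega>) K'))
     = (\<lambda>\<omega>. mmask K' (Om \<omega>))" for K'
    by (auto simp: fun_eq_iff mmask_def vec_eq_iff)
  show ?thesis using c unfolding e .
qed

lemma mmask_em: "em M (\<lambda>\<omega>. mmask K (Om \<omega>))"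
  unfolding em_def mmask_def
proof (intro allI)
  fix i j show "(\<lambda>x. (\<chi> i j. if (i, j) \<in> K then Om x $ i $ j else 0) $ i $ j) \<in> borel_measurable M"
    by (cases "(i,j) \<in> K") (auto simp: ent_meas)
qed

lemma hyperplane_null:
  fixes a :: "real^'m"
  assumes a: "a \<noteq> 0"
  shows "emeasure M {\<omega>\<in>space M. a \<bullet> column k (Om \<omega>) = 0} = 0"
proof -
  obtain i0 where i0: "a $ i0 \<noteq> 0" using a by (auto simp: vec_eq_iff)
  define K where "K = {(i0, k)}"
  have KL: "K \<inter> - K = {}" by auto
  define f where "f p = a \<bullet> column k (fst p + snd p)" for p :: "(real^'l^'m) \<times> (real^'l^'m)"
  have fm: "f \<in> borel_measurable (borel \<Otimes>\<^sub>M borel)"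
  proof -
    have "(\<lambda>p::(real^'l^'m) \<times> (real^'l^'m). fst p + snd p) \<in> borel_measurable (borel \<Otimes>\<^sub>M borel)"
      by (rule borel_measurable_add[OF measurable_fst measurable_snd])
    then have "em (borel \<Otimes>\<^sub>M borel) (\<lambda>p::(real^'l^'m) \<times> (real^'l^'m). fst p + snd p)" by (simp add: em_iff)
    then show ?thesis unfolding f_def inner_vec_def column_def em_def
      by (auto intro!: borel_measurable_sum borel_measurable_times)
  qed
  define S where "S = f -` {0} \<inter> space (borel \<Otimes>\<^sub>M borel)"
  have S: "S \<in> sets (borel \<Otimes>\<^sub>M borel)" unfolding S_def by (rule borel_measurable_vimage[OF fm])
  have aK: "a \<bullet> column k (mmask K Z + y) = a $ i0 * Z $ i0 $ k + a \<bullet> column k y" for Z y :: "real^'l^'m"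
  proof -
    have c1: "column k (mmask K Z + y) = column k (mmask K Z) + column k y" by (simp add: column_def vec_eq_iff)
    have c2: "a \<bullet> column k (mmask K Z) = a $ i0 * Z $ i0 $ k"
      by (simp add: inner_vec_def column_def mmask_def K_def if_distrib cong: if_cong)
    show ?thesis by (simp add: c1 c2 inner_add_right)
  qed
  have "emeasure M {\<omega>\<in>space M. (mmask K (Om \<omega>), mmask (-K) (Om \<omega>)) \<in> S} = 0"
  proof (rule indep_null[OF indep_masks[OF KL] S])
    fix y :: "real^'l^'m"
    have Xm: "(\<lambda>\<omega>. mmask K (Om \<omega>)) \<in> measurable M borel" using em_iff[THEN iffD1, OF mmask_em] .
    have sl: "(\<lambda>x. (x, y)) -` S = {x. a \<bullet> column k (x + y) = 0}"
      by (auto simp: S_def f_def space_pair_measure)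
    have sm: "{x::real^'l^'m. a \<bullet> column k (x + y) = 0} \<in> sets borel"
    proof -
      have "(\<lambda>x::real^'l^'m. (x, y)) \<in> measurable borel (borel \<Otimes>\<^sub>M borel)" by (intro measurable_Pair) auto
      from measurable_compose[OF this fm] have "(\<lambda>x::real^'l^'m. f (x, y)) \<in> borel_measurable borel" .
      from borel_measurable_vimage[OF this, of 0] show ?thesis by (simp add: f_def vimage_def)
    qed
    have "emeasure (distr M borel (\<lambda>\<omega>. mmask K (Om \<omega>))) ((\<lambda>x. (x, y)) -` S)
        = emeasure M ((\<lambda>\<omega>. mmask K (Om \<omega>)) -` {x. a \<bullet> column k (x + y) = 0} \<inter> space M)"
      unfolding sl by (rule emeasure_distr[OF Xm sm])
    also have "(\<lambda>\<omega>. mmask K (Om \<omega>)) -` {x. a \<bullet> column k (x + y) = 0} \<inter> space M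
        = {\<omega>\<in>space M. Om \<omega> $ i0 $ k = - (a \<bullet> column k y) / a $ i0}"
    proof -
      have iff: "(a \<bullet> column k (mmask K (Om \<omega>) + y) = 0) \<longleftrightarrow> (Om \<omega> $ i0 $ k = - (a \<bullet> column k y) / a $ i0)" for \<omega>
        using i0 unfolding aK by (auto simp: field_simps)
      show ?thesis by (auto simp: iff)
    qed
    also have "emeasure M \<dots> = 0" by (rule entry_null)
    finally show "emeasure (distr M borel (\<lambda>\<omega>. mmask K (Om \<omega>))) ((\<lambda>x. (x, y)) -` S) = 0" .
  qed
  moreover have "{\<omega>\<in>space M. (mmask K (Om \<omega>), mmask (-K) (Om \<omega>)) \<in> S} = {\<omega>\<in>space M. a \<bullet> column k (Om \<omega>) = 0}"
    by (auto simp: S_def f_def space_pair_measure mmask_compl)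
  ultimately show ?thesis by simp
qed

end

definition li :: "'l set \<Rightarrow> real^'l^'n \<Rightarrow> bool" where
  "li J X \<longleftrightarrow> (\<forall>c. (\<Sum>j\<in>J. c j *\<^sub>R column j X) = 0 \<longrightarrow> (\<forall>j\<in>J. c j = 0))"

definition gram :: "'l set \<Rightarrow> real^'l^'n \<Rightarrow> real^'l^'l" where
  "gram J X = (\<chi> a b. if a \<in> J \<and> b \<in> J then column a X \<bullet> column b X else (if a = b then 1 else 0))"

lemma det_nz_inj_mat:
  fixes A :: "real^'n^'n"
  shows "det A \<noteq> 0 \<longleftrightarrow> (\<forall>x. A *v x = 0 \<longrightarrow> x = 0)"
  using det_nz_iff_inj[OF matrix_vector_mul_linear[of A]] linear_injective_0[OF matrix_vector_mul_linear[of A]]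
  by (simp add: matrix_of_matrix_vector_mul)

lemma gram_mv:
  "(gram J X *v c) $ a = (if a \<in> J then column a X \<bullet> (\<Sum>b\<in>J. c$b *\<^sub>R column b X) else c $ a)"
proof (cases "a \<in> J")
  case True
  have ga: "gram J X $ a $ b = (if b \<in> J then column a X \<bullet> column b X else 0)" for b
    using True by (auto simp: gram_def)
  have "(gram J X *v c) $ a = (\<Sum>b\<in>UNIV. gram J X $ a $ b * c $ b)"
    by (simp add: matrix_vector_mult_def)
  also have "\<dots> = (\<Sum>b\<in>UNIV. if b \<in> J then (column a X \<bullet> column b X) * c $ b else 0)"
    by (rule sum.cong) (auto simp: ga)
  also have "\<dots> = (\<Sum>b\<in>J. (column a X \<bullet> column b X) * c $ b)"
    by (simp add: sum.inter_restrict[symmetric])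
  also have "\<dots> = column a X \<bullet> (\<Sum>b\<in>J. c$b *\<^sub>R column b X)"
    by (simp add: inner_sum_right mult.commute)
  finally show ?thesis using True by simp
next
  case False
  have ga: "gram J X $ a $ b = (if a = b then 1 else 0)" for b
    using False by (simp add: gram_def)
  have "(gram J X *v c) $ a = (\<Sum>b\<in>UNIV. gram J X $ a $ b * c $ b)"
    by (simp add: matrix_vector_mult_def)
  also have "\<dots> = (\<Sum>b\<in>UNIV. if a = b then c $ b else 0)"
    by (rule sum.cong) (auto simp: ga)
  finally show ?thesis using False by simp
qed

lemma li_gram:
  fixes X :: "real^'l::finite^'n"
  shows "li J X \<longleftrightarrow> det (gram J X) \<noteq> 0"
proof
  assume l: "li J X"
  show "det (gram J X) \<noteq> 0"
  proof (subst det_nz_inj_mat, intro allI impI)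
    fix c assume g: "gram J X *v c = 0"
    define v where "v = (\<Sum>b\<in>J. c$b *\<^sub>R column b X)"
    have cv: "column a X \<bullet> v = 0" if "a \<in> J" for a
      using g[THEN arg_cong[where f="\<lambda>x. x $ a"]] that by (simp add: gram_mv v_def)
    have off: "c $ a = 0" if "a \<notin> J" for a
      using g[THEN arg_cong[where f="\<lambda>x. x $ a"]] that by (simp add: gram_mv)
    have "v \<bullet> v = (\<Sum>b\<in>J. c$b * (column b X \<bullet> v))"
      by (simp add: v_def[of] inner_sum_left) 
    also have "\<dots> = 0" by (simp add: cv)
    finally have "v = 0" by simp
    with l have "\<forall>j\<in>J. c $ j = 0" unfolding li_def v_def by blast
    with off show "c = 0" by (auto simp: vec_eq_iff)
  qed
next
  assume d: "det (gram J X) \<noteq> 0"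
  show "li J X" unfolding li_def
  proof (intro allI impI)
    fix c :: "'l \<Rightarrow> real" assume s: "(\<Sum>j\<in>J. c j *\<^sub>R column j X) = 0"
    define cv where "cv = (\<chi> j. if j \<in> J then c j else 0)"
    have v0: "(\<Sum>b\<in>J. cv$b *\<^sub>R column b X) = 0" using s by (simp add: cv_def)
    have "gram J X *v cv = 0" unfolding vec_eq_iff by (simp only: gram_mv v0 inner_zero_right) (auto simp: cv_def)
    then have "cv = 0" using d det_nz_inj_mat by blast
    then show "\<forall>j\<in>J. c j = 0" by (auto simp: cv_def vec_eq_iff split: if_splits)
  qed
qed

lemma col_mult: "column j (C ** Q) = C *v column j Q"
  by (simp add: column_def matrix_matrix_mult_def matrix_vector_mult_def vec_eq_iff)

lemma li_cong:
  fixes X X' :: "real^'l::finite^'n"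
  shows "(\<And>j. j \<in> J \<Longrightarrow> column j X = column j X') \<Longrightarrow> li J X = li J X'"
  unfolding li_def by (metis (no_types, lifting) sum.cong)

definition comb :: "'l \<Rightarrow> real^'l^'m \<Rightarrow> real^'l^'m \<Rightarrow> real^'l^'m" where
  "comb k y z = (\<chi> i j. if j = k then z $ i $ j else y $ i $ j)"

lemma column_comb: "column j (comb k y z) = (if j = k then column k z else column j y)"
  by (simp add: column_def comb_def vec_eq_iff)

lemma mv_columns: "Q *v c = (\<Sum>j\<in>UNIV. c $ j *\<^sub>R column j Q)"
  by (simp add: vec_eq_iff matrix_vector_mult_def column_def sum_component mult.commute)

lemma slice_sub:
  fixes C :: "real^'m^'n" and y :: "real^'l^'m"
  assumes injC: "inj ((*v) (transpose C))" and k: "k \<notin> J" and card: "card J < CARD('n)"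
    and lJ: "li J (C ** y)"
  shows "\<exists>a. a \<noteq> 0 \<and> {z. \<not> li (insert k J) (C ** comb k y z)} \<subseteq> {z. a \<bullet> column k z = 0}"
proof -
  define V where "V = (\<lambda>j. column j (C ** y)) ` J"
  have fJ: "finite J" by simp
  have fV: "finite V" by (simp add: V_def)
  have "dim V \<le> card V" using dim_le_card[OF span_superset fV] .
  also have "card V \<le> card J" unfolding V_def by (rule card_image_le[OF fJ])
  finally have "dim V < DIM(real^'n)" using card by simp
  then obtain b where b: "b \<noteq> 0" "\<And>x. x \<in> span V \<Longrightarrow> orthogonal b x"
    by (rule orthogonal_to_subspace_exists) blast
  define a where "a = transpose C *v b"
  have a0: "a \<noteq> 0"
  proof
    assume "a = 0"
    then have "transpose C *v b = transpose C *v 0" unfolding a_def by (metis matrix_vector_mult_0_right)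
    with injC have "b = 0" by (meson injD)
    with b show False by simp
  qed
  have "{z. \<not> li (insert k J) (C ** comb k y z)} \<subseteq> {z. a \<bullet> column k z = 0}"
  proof
    fix z assume "z \<in> {z. \<not> li (insert k J) (C ** comb k y z)}"
    then have "\<not> li (insert k J) (C ** comb k y z)" by simp
    then obtain c j1 where c: "(\<Sum>j\<in>insert k J. c j *\<^sub>R column j (C ** comb k y z)) = 0"
      and j1: "j1 \<in> insert k J" "c j1 \<noteq> 0"
      unfolding li_def by blast
    have cols: "column j (C ** comb k y z) = (if j = k then C *v column k z else column j (C ** y))" for j
      by (simp add: col_mult column_comb)
    have colk: "column k (C ** comb k y z) = C *v column k z" by (simp add: cols)
    have sJ: "(\<Sum>j\<in>J. c j *\<^sub>R column j (C ** comb k y z)) = (\<Sum>j\<in>J. c j *\<^sub>R column j (C ** y))"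
      using k by (intro sum.cong) (auto simp: cols)
    have e: "c k *\<^sub>R (C *v column k z) + (\<Sum>j\<in>J. c j *\<^sub>R column j (C ** y)) = 0"
      using c unfolding sum.insert[OF fJ k] sJ colk .
    have ck: "c k \<noteq> 0"
    proof
      assume "c k = 0"
      then have "(\<Sum>j\<in>J. c j *\<^sub>R column j (C ** y)) = 0" using e by simp
      with lJ have "\<forall>j\<in>J. c j = 0" unfolding li_def by blast
      with j1 \<open>c k = 0\<close> show False by auto
    qed
    define W where "W = (\<Sum>j\<in>J. c j *\<^sub>R column j (C ** y))"
    have e2: "c k *\<^sub>R (C *v column k z) = - W" using e unfolding W_def by (simp add: eq_neg_iff_add_eq_0)
    have "C *v column k z = (1 / c k) *\<^sub>R (c k *\<^sub>R (C *v column k z))" using ck by simp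
    also have "\<dots> = (1 / c k) *\<^sub>R (- W)" using e2 by simp
    finally have cz: "C *v column k z = (1 / c k) *\<^sub>R (- W)" .
    have "W \<in> span V" unfolding W_def
      by (intro span_sum span_scale span_base) (auto simp: V_def)
    then have "C *v column k z \<in> span V" unfolding cz by (intro span_scale span_neg)
    then have "b \<bullet> (C *v column k z) = 0" using b(2) by (simp add: orthogonal_def)
    then show "z \<in> {z. a \<bullet> column k z = 0}" by (simp add: a_def inner_mat_swap)
  qed
  with a0 show ?thesis by blast
qed

lemma sets_ne_eq:
  assumes "f \<in> borel_measurable N" "g \<in> borel_measurable N"
  shows "{x\<in>space N. (f x :: real) \<noteq> 0 \<and> (g x :: real) = 0} \<in> sets N"
proof -
  have "{x\<in>space N. f x \<noteq> 0 \<and> g x = 0} = (space N - (f -` {0} \<inter> space N)) \<inter> (g -` {0} \<inter> space N)"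
    by auto
  then show ?thesis using borel_measurable_vimage[OF assms(1)] borel_measurable_vimage[OF assms(2)]
    by auto
qed

lemma em_gram: "em N F \<Longrightarrow> em N (\<lambda>x. gram J (F x))"
  unfolding em_def
proof (intro allI)
  fix a b assume F: "\<forall>i j. (\<lambda>x. F x $ i $ j) \<in> borel_measurable N"
  show "(\<lambda>x. gram J (F x) $ a $ b) \<in> borel_measurable N"
  proof (cases "a \<in> J \<and> b \<in> J")
    case True
    then show ?thesis using F
      by (simp add: gram_def inner_vec_def column_def) (auto intro!: borel_measurable_sum borel_measurable_times)
  next
    case False
    then have "(\<lambda>x. gram J (F x) $ a $ b) = (\<lambda>x. if a = b then 1 else 0)" by (auto simp: gram_def)
    then show ?thesis by simp
  qed
qed

context gauss
begin

lemma li_step: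
  fixes C :: "real^'m^'n"
  assumes injC: "inj ((*v) (transpose C))" and k: "k \<notin> J" and card: "card J < CARD('n)"
    and IH: "AE \<omega> in M. li J (C ** Om \<omega>)"
  shows "AE \<omega> in M. li (insert k J) (C ** Om \<omega>)"
proof -
  define Kc where "Kc = {p :: 'm \<times> 'l. snd p = k}"
  define Z where "Z \<omega> = mmask Kc (Om \<omega>)" for \<omega>
  define Y where "Y \<omega> = mmask (- Kc) (Om \<omega>)" for \<omega>
  have combYZ: "comb k (Y \<omega>) (Z \<omega>) = Om \<omega>" for \<omega>
    by (simp add: comb_def Y_def Z_def mmask_def Kc_def vec_eq_iff)
  have cY: "column j (Y \<omega>) = column j (Om \<omega>)" if "j \<noteq> k" for j \<omega>
    using that by (simp add: column_def Y_def mmask_def Kc_def vec_eq_iff)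
  have liY: "li J (C ** Y \<omega>) = li J (C ** Om \<omega>)" for \<omega>
  proof (intro li_cong)
    fix j assume "j \<in> J"
    then have "j \<noteq> k" using k by auto
    then show "column j (C ** Y \<omega>) = column j (C ** Om \<omega>)" by (simp add: col_mult cY)
  qed
  have colZ: "column k (Z \<omega>) = column k (Om \<omega>)" for \<omega>
    by (simp add: column_def Z_def mmask_def Kc_def vec_eq_iff)
  define S where "S = {p \<in> space (borel \<Otimes>\<^sub>M borel). det (gram J (C ** snd p)) \<noteq> 0 \<and>
      det (gram (insert k J) (C ** comb k (snd p) (fst p))) = 0}"
  have Sm: "S \<in> sets (borel \<Otimes>\<^sub>M (borel :: (real^'l^'m) measure))"
  proof -
    have es: "em (borel \<Otimes>\<^sub>M borel) (\<lambda>p::(real^'l^'m) \<times> (real^'l^'m). snd p)"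
      by (rule em_iff[THEN iffD2, OF measurable_snd])
    have ef: "em (borel \<Otimes>\<^sub>M borel) (\<lambda>p::(real^'l^'m) \<times> (real^'l^'m). fst p)"
      by (rule em_iff[THEN iffD2, OF measurable_fst])
    have ec: "em (borel \<Otimes>\<^sub>M borel) (\<lambda>p::(real^'l^'m) \<times> (real^'l^'m). comb k (snd p) (fst p))"
      unfolding em_def comb_def
    proof (intro allI)
      fix i j show "(\<lambda>x::(real^'l^'m) \<times> (real^'l^'m). (\<chi> i j. if j = k then fst x $ i $ j else snd x $ i $ j) $ i $ j)
          \<in> borel_measurable (borel \<Otimes>\<^sub>M borel)"
        using es ef unfolding em_def by (cases "j = k") auto
    qed
    show ?thesis unfolding S_def
      by (intro sets_ne_eq det_meas em_gram em_mult em_const es ec)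
  qed
  have null: "emeasure M {\<omega>\<in>space M. (Z \<omega>, Y \<omega>) \<in> S} = 0"
  proof (rule indep_null[OF _ Sm])
    show "indep_var borel Z borel Y" unfolding Z_def Y_def by (rule indep_masks) auto
  next
    fix y :: "real^'l^'m"
    have Zm: "Z \<in> measurable M borel" unfolding Z_def using em_iff[THEN iffD1, OF mmask_em] .
    show "emeasure (distr M borel Z) ((\<lambda>x. (x, y)) -` S) = 0"
    proof (cases "li J (C ** y)")
      case False
      then have "(\<lambda>x. (x, y)) -` S = {}" by (auto simp: S_def li_gram)
      then show ?thesis by simp
    next
      case True
      obtain a where a: "a \<noteq> 0" "{z. \<not> li (insert k J) (C ** comb k y z)} \<subseteq> {z. a \<bullet> column k z = 0}"
        using slice_sub[OF injC k card True] by blast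
      have sub: "(\<lambda>x. (x, y)) -` S \<subseteq> {z. a \<bullet> column k z = 0}"
        using a(2) by (auto simp: S_def li_gram)
      have hm: "(\<lambda>z::real^'l^'m. a \<bullet> column k z) \<in> borel_measurable borel"
      proof -
        have "em borel (\<lambda>z::real^'l^'m. z)" by (rule em_iff[THEN iffD2]) simp
        then show ?thesis unfolding inner_vec_def column_def em_def
          by (auto intro!: borel_measurable_sum borel_measurable_times)
      qed
      have hs: "{z::real^'l^'m. a \<bullet> column k z = 0} \<in> sets borel"
        using borel_measurable_vimage[OF hm, of 0] by (simp add: vimage_def)
      have "emeasure (distr M borel Z) ((\<lambda>x. (x, y)) -` S) \<le> emeasure (distr M borel Z) {z. a \<bullet> column k z = 0}"
        by (rule emeasure_mono[OF sub]) (simp add: hs)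
      also have "\<dots> = emeasure M (Z -` {z. a \<bullet> column k z = 0} \<inter> space M)"
        by (rule emeasure_distr[OF Zm hs])
      also have "Z -` {z. a \<bullet> column k z = 0} \<inter> space M = {\<omega>\<in>space M. a \<bullet> column k (Om \<omega>) = 0}"
        by (auto simp: colZ)
      also have "emeasure M \<dots> = 0" by (rule hyperplane_null[OF a(1)])
      finally show ?thesis by simp
    qed
  qed
  have Em: "{\<omega>\<in>space M. (Z \<omega>, Y \<omega>) \<in> S} \<in> sets M"
  proof -
    have "(\<lambda>\<omega>. (Z \<omega>, Y \<omega>)) \<in> measurable M (borel \<Otimes>\<^sub>M borel)"
      unfolding Z_def Y_def using em_iff[THEN iffD1, OF mmask_em] by (intro measurable_Pair) auto
    from measurable_sets[OF this Sm] show ?thesis by (simp add: vimage_def Int_def conj_commute)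
  qed
  have AE2: "AE \<omega> in M. (Z \<omega>, Y \<omega>) \<notin> S"
    by (rule AE_I'[OF null_setsI[OF null Em]]) auto
  show ?thesis using IH AE2
  proof eventually_elim
    case (elim \<omega>)
    then show ?case using liY[of \<omega>] combYZ[of \<omega>]
      by (auto simp: S_def li_gram space_pair_measure)
  qed
qed

lemma li_all:
  fixes C :: "real^'m^'n"
  assumes injC: "inj ((*v) (transpose C))" and card: "CARD('l) \<le> CARD('n)"
  shows "AE \<omega> in M. li UNIV (C ** Om \<omega>)"
proof -
  have "finite J \<Longrightarrow> AE \<omega> in M. li J (C ** Om \<omega>)" for J :: "'l set"
  proof (induction J rule: finite_induct)
    case empty then show ?case by (simp add: li_def)
  next
    case (insert k J)
    have "J \<subset> UNIV" using insert(2) by auto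
    then have "card J < CARD('l)" by (simp add: psubset_card_mono)
    then have "card J < CARD('n)" using card by simp
    then show ?case by (rule li_step[OF injC insert(2) _ insert(3)])
  qed
  then show ?thesis by simp
qed

lemma li_invertible:
  fixes Q :: "real^'l^'n"
  assumes "li UNIV Q"
  shows "invertible (transpose Q ** Q)"
proof -
  have "det (transpose Q ** Q) \<noteq> 0"
  proof (subst det_nz_inj_mat, intro allI impI)
    fix c assume h: "(transpose Q ** Q) *v c = 0"
    have "(Q *v c) \<bullet> (Q *v c) = c \<bullet> (transpose Q *v (Q *v c))"
      using inner_mat_swap[of c "transpose Q" "Q *v c"] by simp
    also have "\<dots> = 0" using h by (simp add: matrix_vector_mul_assoc)
    finally have "Q *v c = 0" by simp
    then have "(\<Sum>j\<in>UNIV. c $ j *\<^sub>R column j Q) = 0" by (simp add: mv_columns)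
    with assms have "\<forall>j. c $ j = 0" unfolding li_def by blast
    then show "c = 0" by (simp add: vec_eq_iff)
  qed
  then show ?thesis by (simp add: invertible_det_nz)
qed

end

definition toMat :: "('m \<times> 'l \<Rightarrow> real) \<Rightarrow> real^'l^'m" where
  "toMat f = (\<chi> i j. f (i, j))"

lemma toMat_meas: "(toMat :: ('m \<times> 'l \<Rightarrow> real) \<Rightarrow> real^'l^'m) \<in> measurable (PiM UNIV (\<lambda>_. borel)) borel"
proof -
  have "(\<lambda>f. (\<chi> i j. if (i, j) \<in> (UNIV :: ('m \<times> 'l) set) then f (i, j) else 0) :: real^'l^'m)
     \<in> measurable (PiM UNIV (\<lambda>_. borel)) borel" by (rule mmask_meas)
  then show ?thesis unfolding toMat_def[abs_def] by simp
qed

definition ND :: "real measure" where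
  "ND = density lborel (\<lambda>x. ennreal (std_normal_density x))"

definition hq :: "'l \<Rightarrow> 'm \<Rightarrow> 'm \<Rightarrow> real^'l^'m \<Rightarrow> real" where
  "hq j0 a b X = X $ a $ j0 * X $ b $ j0 / (column j0 X \<bullet> column j0 X)"

lemma hq_meas: "hq j0 a b \<in> borel_measurable borel"
proof -
  have "em borel (\<lambda>z::real^'l^'m. z)" by (rule em_iff[THEN iffD2]) simp
  then show ?thesis unfolding hq_def inner_vec_def column_def em_def
    by (auto intro!: borel_measurable_sum borel_measurable_times borel_measurable_divide)
qed

lemma hq_bound: "\<bar>hq j0 a b X\<bar> \<le> 1"
proof -
  let ?x = "column j0 X"
  have xa: "\<bar>?x $ a\<bar> \<le> norm ?x" "\<bar>?x $ b\<bar> \<le> norm ?x" by (rule component_le_norm_cart)+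
  have "\<bar>?x $ a * ?x $ b\<bar> \<le> norm ?x * norm ?x"
    unfolding abs_mult by (intro mult_mono xa) auto
  also have "\<dots> = ?x \<bullet> ?x" by (simp add: power2_norm_eq_inner[symmetric] power2_eq_square)
  finally have h: "\<bar>?x $ a * ?x $ b\<bar> \<le> ?x \<bullet> ?x" .
  show ?thesis
  proof (cases "?x \<bullet> ?x = 0")
    case True then show ?thesis by (simp add: hq_def)
  next
    case False
    then have "?x \<bullet> ?x > 0" using inner_ge_zero[of ?x] by linarith
    then show ?thesis using h by (simp add: hq_def column_def abs_divide divide_le_eq)
  qed
qed

context gauss
begin

lemma distr_ent: "distributed M lborel X std_normal_density \<Longrightarrow> distr M borel X = ND"
proof -
  assume d: "distributed M lborel X std_normal_density"
  have "distr M borel X = distr M lborel X" by (rule distr_cong) simp_all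
  also have "\<dots> = ND" using d by (simp add: distributed_def ND_def)
  finally show ?thesis .
qed

lemma prob_ND: "prob_space ND"
proof -
  have d: "distributed M lborel (\<lambda>\<omega>. Om \<omega> $ undefined $ undefined) std_normal_density" by (rule dist)
  have "prob_space (distr M borel (\<lambda>\<omega>. Om \<omega> $ undefined $ undefined))"
    by (rule prob_space_distr) (rule ent_meas)
  then show ?thesis using distr_ent[OF d] by simp
qed

lemma law_of:
  fixes Y :: "'m \<times> 'l \<Rightarrow> 's \<Rightarrow> real"
  assumes rv: "\<And>p. Y p \<in> borel_measurable M"
    and eq: "distr M (PiM UNIV (\<lambda>_. borel)) (\<lambda>\<omega>. \<lambda>p\<in>UNIV. Y p \<omega>) = PiM UNIV (\<lambda>_. ND)"
  shows "distr M borel (\<lambda>\<omega>. toMat (\<lambda>p. Y p \<omega>)) = distr (PiM UNIV (\<lambda>_. ND)) borel (toMat :: _ \<Rightarrow> real^'l^'m)"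
proof -
  have f: "(\<lambda>\<omega>. \<lambda>p\<in>UNIV. Y p \<omega>) \<in> measurable M (PiM UNIV (\<lambda>_. borel))"
    by (rule measurable_restrict) (simp add: rv)
  have 1: "distr (distr M (PiM UNIV (\<lambda>_. borel)) (\<lambda>\<omega>. \<lambda>p\<in>UNIV. Y p \<omega>)) borel (toMat :: _ \<Rightarrow> real^'l^'m)
      = distr M borel (toMat \<circ> (\<lambda>\<omega>. \<lambda>p\<in>UNIV. Y p \<omega>))"
    by (rule distr_distr[OF toMat_meas f])
  have 2: "toMat \<circ> (\<lambda>\<omega>. \<lambda>p\<in>UNIV. Y p \<omega>) = (\<lambda>\<omega>. toMat (\<lambda>p. Y p \<omega>))"
    by (simp add: fun_eq_iff toMat_def)
  from 1 show ?thesis unfolding 2 eq by simp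
qed

lemma law_indep:
  fixes Y :: "'m \<times> 'l \<Rightarrow> 's \<Rightarrow> real"
  assumes ind': "indep_vars (\<lambda>_. borel) Y UNIV"
    and d: "\<And>p. distributed M lborel (Y p) std_normal_density"
  shows "distr M (PiM UNIV (\<lambda>_. borel)) (\<lambda>\<omega>. \<lambda>p\<in>UNIV. Y p \<omega>) = PiM UNIV (\<lambda>_. ND)"
proof -
  have rv: "random_variable borel (Y p)" for p
    using distributed_measurable[OF d[of p]] by simp
  have "distr M (PiM UNIV (\<lambda>_. borel)) (\<lambda>\<omega>. \<lambda>p\<in>UNIV. Y p \<omega>) = PiM UNIV (\<lambda>p. distr M borel (Y p))"
    using indep_vars_iff_distr_eq_PiM[where I=UNIV and M'="\<lambda>_. borel" and X=Y] rv ind' by simp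
  also have "\<dots> = PiM UNIV (\<lambda>_. ND)"
    by (rule PiM_cong) (simp_all add: distr_ent[OF d])
  finally show ?thesis .
qed

lemma Om_toMat: "Om \<omega> = toMat (\<lambda>p. (\<lambda>(i, j) \<omega>. Om \<omega> $ i $ j) p \<omega>)"
  by (simp add: toMat_def vec_eq_iff)

lemma lawOm: "distr M borel Om = distr (PiM UNIV (\<lambda>_. ND)) borel toMat"
proof -
  have e: "(\<lambda>\<omega>. toMat (\<lambda>p. (\<lambda>(i, j) \<omega>. Om \<omega> $ i $ j) p \<omega>)) = Om"
    by (simp add: fun_eq_iff toMat_def vec_eq_iff)
  have "distr M borel (\<lambda>\<omega>. toMat (\<lambda>p. (\<lambda>(i, j) \<omega>. Om \<omega> $ i $ j) p \<omega>)) = distr (PiM UNIV (\<lambda>_. ND)) borel toMat"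
  proof (rule law_of)
    show "(\<lambda>(i, j) \<omega>. Om \<omega> $ i $ j) p \<in> borel_measurable M" for p
      by (cases p) (simp add: ent_meas)
    show "distr M (PiM UNIV (\<lambda>_. borel)) (\<lambda>\<omega>. \<lambda>p\<in>UNIV. (\<lambda>(i, j) \<omega>. Om \<omega> $ i $ j) p \<omega>) = PiM UNIV (\<lambda>_. ND)"
    proof (rule law_indep[OF ind])
      show "distributed M lborel ((\<lambda>(i, j) \<omega>. Om \<omega> $ i $ j) p) std_normal_density" for p
        by (cases p) (simp add: dist)
    qed
  qed
  then show ?thesis unfolding e .
qed

lemma integral_law:
  fixes Y :: "'m \<times> 'l \<Rightarrow> 's \<Rightarrow> real"
  assumes Ym: "\<And>p. Y p \<in> borel_measurable M"
    and law: "distr M borel (\<lambda>\<omega>. toMat (\<lambda>p. Y p \<omega>)) = distr (PiM UNIV (\<lambda>_. ND)) borel (toMat :: _ \<Rightarrow> real^'l^'m)"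
    and h: "(h :: real^'l^'m \<Rightarrow> real) \<in> borel_measurable borel"
  shows "integral\<^sup>L M (\<lambda>\<omega>. h (Om \<omega>)) = integral\<^sup>L M (\<lambda>\<omega>. h (toMat (\<lambda>p. Y p \<omega>)))"
proof -
  have m2: "(\<lambda>\<omega>. toMat (\<lambda>p. Y p \<omega>) :: real^'l^'m) \<in> measurable M borel"
  proof -
    have "(\<lambda>\<omega>. \<lambda>p\<in>UNIV. Y p \<omega>) \<in> measurable M (PiM UNIV (\<lambda>_. borel))"
      by (rule measurable_restrict) (simp add: Ym)
    from measurable_compose[OF this toMat_meas] show ?thesis by (simp add: toMat_def)
  qed
  have "integral\<^sup>L M (\<lambda>\<omega>. h (Om \<omega>)) = integral\<^sup>L (distr M borel Om) h"
    by (rule integral_distr[symmetric, OF Om_meas h])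
  also have "\<dots> = integral\<^sup>L (distr M borel (\<lambda>\<omega>. toMat (\<lambda>p. Y p \<omega>))) h"
    by (simp add: lawOm law)
  also have "\<dots> = integral\<^sup>L M (\<lambda>\<omega>. h (toMat (\<lambda>p. Y p \<omega>)))"
    by (rule integral_distr[OF m2 h])
  finally show ?thesis .
qed

lemma law_flip:
  fixes p0 :: "'m \<times> 'l"
  defines "Y \<equiv> \<lambda>p \<omega>. (if p = p0 then -1 else 1) * Om \<omega> $ fst p $ snd p"
  shows "distr M borel (\<lambda>\<omega>. toMat (\<lambda>p. Y p \<omega>)) = distr (PiM UNIV (\<lambda>_. ND)) borel (toMat :: _ \<Rightarrow> real^'l^'m)"
proof (rule law_of)
  show "Y p \<in> borel_measurable M" for p
    unfolding Y_def by (rule borel_measurable_times) (auto simp: ent_meas)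
  have i2: "indep_vars (\<lambda>_. borel) (\<lambda>p x. (\<lambda>p t. (if p = p0 then -1 else 1) * t) p ((\<lambda>(i, j) \<omega>. Om \<omega> $ i $ j) p x)) UNIV"
    by (rule indep_vars_compose2[OF ind]) simp
  have iY: "indep_vars (\<lambda>_. borel) Y UNIV"
    using i2 by (rule indep_vars_cong[THEN iffD1, rotated -1]) (auto simp: Y_def fun_eq_iff split: prod.split)
  have dY: "distributed M lborel (Y p) std_normal_density" for p
  proof -
    define \<alpha> :: real where "\<alpha> = (if p = p0 then -1 else 1)"
    have a0: "\<alpha> \<noteq> 0" and a1: "\<bar>\<alpha>\<bar> = 1" by (auto simp: \<alpha>_def)
    have "distributed M lborel (\<lambda>x. 0 + \<alpha> * Om x $ fst p $ snd p) (\<lambda>x. ennreal (normal_density (0 + \<alpha> * 0) (\<bar>\<alpha>\<bar> * 1) x))"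
      by (rule normal_density_affine[OF dist]) (simp_all add: a0)
    moreover have "(\<lambda>x. 0 + \<alpha> * Om x $ fst p $ snd p) = Y p" by (simp add: Y_def \<alpha>_def fun_eq_iff)
    moreover have "(0 + \<alpha> * 0) = (0::real)" "\<bar>\<alpha>\<bar> * 1 = (1::real)" using a1 by simp_all
    ultimately show ?thesis by simp
  qed
  show "distr M (PiM UNIV (\<lambda>_. borel)) (\<lambda>\<omega>. \<lambda>p\<in>UNIV. Y p \<omega>) = PiM UNIV (\<lambda>_. ND)"
    by (rule law_indep[OF iY dY])
qed

lemma law_perm:
  fixes \<tau> :: "'m \<times> 'l \<Rightarrow> 'm \<times> 'l"
  assumes inj: "inj \<tau>"
  defines "Y \<equiv> \<lambda>p \<omega>. Om \<omega> $ fst (\<tau> p) $ snd (\<tau> p)"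
  shows "distr M borel (\<lambda>\<omega>. toMat (\<lambda>p. Y p \<omega>)) = distr (PiM UNIV (\<lambda>_. ND)) borel (toMat :: _ \<Rightarrow> real^'l^'m)"
proof (rule law_of)
  show "Y p \<in> borel_measurable M" for p unfolding Y_def by (rule ent_meas)
  define X where "X = (\<lambda>p \<omega>. Om \<omega> $ fst p $ snd p)"
  have fX: "(\<lambda>\<omega>. \<lambda>p\<in>UNIV. X p \<omega>) \<in> measurable M (PiM UNIV (\<lambda>_. borel))"
    by (rule measurable_restrict) (simp add: X_def ent_meas)
  have lawX: "distr M (PiM UNIV (\<lambda>_. borel)) (\<lambda>\<omega>. \<lambda>p\<in>UNIV. X p \<omega>) = PiM UNIV (\<lambda>_. ND)"
  proof (rule law_indep)
    show "indep_vars (\<lambda>_. borel) X UNIV"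
      using ind by (rule indep_vars_cong[THEN iffD1, rotated -1]) (auto simp: X_def fun_eq_iff split: prod.split)
    show "distributed M lborel (X p) std_normal_density" for p by (simp add: X_def dist)
  qed
  have rm: "(\<lambda>f. \<lambda>p\<in>UNIV. f (\<tau> p)) \<in> measurable (PiM UNIV (\<lambda>_. borel)) (PiM UNIV (\<lambda>_::'m \<times> 'l. borel :: real measure))"
    by (rule measurable_restrict) (rule measurable_component_singleton, simp)
  have "distr M (PiM UNIV (\<lambda>_. borel)) (\<lambda>\<omega>. \<lambda>p\<in>UNIV. Y p \<omega>)
      = distr (distr M (PiM UNIV (\<lambda>_. borel)) (\<lambda>\<omega>. \<lambda>p\<in>UNIV. X p \<omega>)) (PiM UNIV (\<lambda>_. borel)) (\<lambda>f. \<lambda>p\<in>UNIV. f (\<tau> p))"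
    by (subst distr_distr[OF rm fX]) (simp add: comp_def X_def Y_def)
  also have "\<dots> = distr (PiM UNIV (\<lambda>_. ND)) (PiM UNIV (\<lambda>_. borel)) (\<lambda>f. \<lambda>p\<in>UNIV. f (\<tau> p))"
    by (simp add: lawX)
  also have "\<dots> = distr (PiM UNIV (\<lambda>_. ND)) (PiM UNIV (\<lambda>i. (\<lambda>_. ND) (\<tau> i))) (\<lambda>f. \<lambda>p\<in>UNIV. f (\<tau> p))"
    by (rule distr_cong) (auto intro!: sets_PiM_cong simp: ND_def)
  also have "\<dots> = PiM UNIV (\<lambda>i. (\<lambda>_. ND) (\<tau> i))"
    by (rule distr_PiM_reindex) (auto simp: prob_ND inj)
  finally show "distr M (PiM UNIV (\<lambda>_. borel)) (\<lambda>\<omega>. \<lambda>p\<in>UNIV. Y p \<omega>) = PiM UNIV (\<lambda>_. ND)" by simp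
qed

end

context gauss
begin

lemma hq_int: "integrable M (\<lambda>\<omega>. hq j0 a b (Om \<omega>))"
proof (rule integrable_const_bound[where B=1])
  show "AE x in M. norm (hq j0 a b (Om x)) \<le> 1" by (rule AE_I2) (simp add: hq_bound)
  show "(\<lambda>\<omega>. hq j0 a b (Om \<omega>)) \<in> borel_measurable M"
    by (rule measurable_compose[OF Om_meas hq_meas])
qed

lemma E_mix:
  assumes ab: "a \<noteq> b"
  shows "integral\<^sup>L M (\<lambda>\<omega>. hq j0 a b (Om \<omega>)) = 0"
proof -
  define Y where "Y = (\<lambda>p \<omega>. (if p = (a, j0) then -1 else 1) * Om \<omega> $ fst p $ snd p)"
  have Ym: "Y p \<in> borel_measurable M" for p
    unfolding Y_def by (rule borel_measurable_times) (auto simp: ent_meas)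
  have law: "distr M borel (\<lambda>\<omega>. toMat (\<lambda>p. Y p \<omega>)) = distr (PiM UNIV (\<lambda>_. ND)) borel (toMat :: _ \<Rightarrow> real^'l^'m)"
    unfolding Y_def by (rule law_flip)
  have flip: "hq j0 a b (toMat (\<lambda>p. Y p \<omega>)) = - hq j0 a b (Om \<omega>)" for \<omega>
  proof -
    let ?X = "toMat (\<lambda>p. Y p \<omega>)"
    have ent: "?X $ i $ j = (if (i, j) = (a, j0) then -1 else 1) * Om \<omega> $ i $ j" for i j
      by (simp add: toMat_def Y_def)
    have den: "column j0 ?X \<bullet> column j0 ?X = column j0 (Om \<omega>) \<bullet> column j0 (Om \<omega>)"
      unfolding inner_vec_def column_def by (rule sum.cong) (auto simp: ent)
    show ?thesis unfolding hq_def den using ab by (simp add: ent)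
  qed
  have "integral\<^sup>L M (\<lambda>\<omega>. hq j0 a b (Om \<omega>)) = integral\<^sup>L M (\<lambda>\<omega>. hq j0 a b (toMat (\<lambda>p. Y p \<omega>)))"
    by (rule integral_law[OF Ym law hq_meas])
  also have "\<dots> = - integral\<^sup>L M (\<lambda>\<omega>. hq j0 a b (Om \<omega>))" by (simp add: flip)
  finally show ?thesis by simp
qed

lemma E_diag:
  shows "integral\<^sup>L M (\<lambda>\<omega>. hq j0 a a (Om \<omega>)) = integral\<^sup>L M (\<lambda>\<omega>. hq j0 b b (Om \<omega>))"
proof -
  define \<sigma> where "\<sigma> = (\<lambda>i. if i = a then b else if i = b then a else i)"
  have ss: "\<sigma> (\<sigma> i) = i" for i by (simp add: \<sigma>_def)
  have bij: "bij_betw \<sigma> UNIV UNIV" by (rule bij_betwI[where g=\<sigma>]) (auto simp: ss)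
  define \<tau> where "\<tau> = (\<lambda>p::'m \<times> 'l. (\<sigma> (fst p), snd p))"
  have inj: "inj \<tau>" unfolding \<tau>_def inj_def by (metis prod.collapse prod.inject ss)
  define Y where "Y = (\<lambda>p \<omega>. Om \<omega> $ fst (\<tau> p) $ snd (\<tau> p))"
  have Ym: "Y p \<in> borel_measurable M" for p unfolding Y_def by (rule ent_meas)
  have law: "distr M borel (\<lambda>\<omega>. toMat (\<lambda>p. Y p \<omega>)) = distr (PiM UNIV (\<lambda>_. ND)) borel (toMat :: _ \<Rightarrow> real^'l^'m)"
    unfolding Y_def by (rule law_perm[OF inj])
  have sw: "hq j0 a a (toMat (\<lambda>p. Y p \<omega>)) = hq j0 b b (Om \<omega>)" for \<omega>
  proof -
    let ?X = "toMat (\<lambda>p. Y p \<omega>)"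
    have ent: "?X $ i $ j = Om \<omega> $ \<sigma> i $ j" for i j
      by (simp add: toMat_def Y_def \<tau>_def)
    have "column j0 ?X \<bullet> column j0 ?X = (\<Sum>i\<in>UNIV. Om \<omega> $ \<sigma> i $ j0 * Om \<omega> $ \<sigma> i $ j0)"
      unfolding inner_vec_def column_def by (simp add: ent)
    also have "\<dots> = (\<Sum>i\<in>UNIV. Om \<omega> $ i $ j0 * Om \<omega> $ i $ j0)"
      by (rule sum.reindex_bij_betw[OF bij])
    also have "\<dots> = column j0 (Om \<omega>) \<bullet> column j0 (Om \<omega>)"
      unfolding inner_vec_def column_def by simp
    finally have den: "column j0 ?X \<bullet> column j0 ?X = column j0 (Om \<omega>) \<bullet> column j0 (Om \<omega>)" .
    have "\<sigma> a = b" by (simp add: \<sigma>_def)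
    then show ?thesis unfolding hq_def den by (simp add: ent)
  qed
  have "integral\<^sup>L M (\<lambda>\<omega>. hq j0 a a (Om \<omega>)) = integral\<^sup>L M (\<lambda>\<omega>. hq j0 a a (toMat (\<lambda>p. Y p \<omega>)))"
    by (rule integral_law[OF Ym law hq_meas])
  also have "\<dots> = integral\<^sup>L M (\<lambda>\<omega>. hq j0 b b (Om \<omega>))" by (simp add: sw)
  finally show ?thesis .
qed

lemma col_nonzero_AE: "AE \<omega> in M. column j0 (Om \<omega>) \<noteq> 0"
proof (rule AE_I')
  let ?N = "{\<omega>\<in>space M. Om \<omega> $ undefined $ j0 = 0}"
  have "?N = (\<lambda>\<omega>. Om \<omega> $ undefined $ j0) -` {0} \<inter> space M" by auto
  then have "?N \<in> sets M" using borel_measurable_vimage[OF ent_meas] by simp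
  then show "?N \<in> null_sets M" using entry_null by (intro null_setsI) auto
  show "{\<omega> \<in> space M. \<not> column j0 (Om \<omega>) \<noteq> 0} \<subseteq> ?N"
    by (auto simp: column_def vec_eq_iff)
qed

lemma hq_sum: "(\<Sum>a\<in>UNIV. hq j0 a a X) = (if column j0 X = 0 then 0 else 1)"
proof -
  have "(\<Sum>a\<in>UNIV. hq j0 a a X) = (\<Sum>a\<in>UNIV. X $ a $ j0 * X $ a $ j0) / (column j0 X \<bullet> column j0 X)"
    by (simp add: hq_def sum_divide_distrib)
  also have "(\<Sum>a\<in>UNIV. X $ a $ j0 * X $ a $ j0) = column j0 X \<bullet> column j0 X"
    by (simp add: inner_vec_def column_def)
  finally show ?thesis by simp
qed

lemma E_diag_val: "integral\<^sup>L M (\<lambda>\<omega>. hq j0 a a (Om \<omega>)) = 1 / real CARD('m)"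
proof -
  have "(\<Sum>b\<in>UNIV. integral\<^sup>L M (\<lambda>\<omega>. hq j0 b b (Om \<omega>))) = integral\<^sup>L M (\<lambda>\<omega>. \<Sum>b\<in>UNIV. hq j0 b b (Om \<omega>))"
    by (subst Bochner_Integration.integral_sum) (simp_all add: hq_int)
  also have "\<dots> = integral\<^sup>L M (\<lambda>\<omega>. 1)"
  proof (rule integral_cong_AE)
    show "(\<lambda>\<omega>. \<Sum>b\<in>UNIV. hq j0 b b (Om \<omega>)) \<in> borel_measurable M"
      by (intro borel_measurable_sum measurable_compose[OF Om_meas hq_meas])
    show "(\<lambda>\<omega>. 1::real) \<in> borel_measurable M" by simp
    show "AE \<omega> in M. (\<Sum>b\<in>UNIV. hq j0 b b (Om \<omega>)) = 1"
      using col_nonzero_AE by eventually_elim (simp add: hq_sum)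
  qed
  also have "\<dots> = 1" by (simp add: prob_space)
  finally have "(\<Sum>b\<in>UNIV. integral\<^sup>L M (\<lambda>\<omega>. hq j0 b b (Om \<omega>))) = 1" .
  moreover have "(\<Sum>b\<in>UNIV. integral\<^sup>L M (\<lambda>\<omega>. hq j0 b b (Om \<omega>))) = real CARD('m) * integral\<^sup>L M (\<lambda>\<omega>. hq j0 a a (Om \<omega>))"
  proof -
    have "(\<Sum>b\<in>UNIV. integral\<^sup>L M (\<lambda>\<omega>. hq j0 b b (Om \<omega>))) = (\<Sum>b\<in>(UNIV::'m set). integral\<^sup>L M (\<lambda>\<omega>. hq j0 a a (Om \<omega>)))"
      by (rule sum.cong[OF refl]) (rule E_diag)
    then show ?thesis by simp
  qed
  ultimately show ?thesis by (simp add: field_simps)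
qed

lemma quot_expand:
  fixes w :: "real^'m"
  shows "(w \<bullet> column j0 X)^2 / (column j0 X \<bullet> column j0 X) = (\<Sum>a\<in>UNIV. \<Sum>b\<in>UNIV. w $ a * w $ b * hq j0 a b X)"
proof -
  have "(w \<bullet> column j0 X)^2 = (\<Sum>a\<in>UNIV. \<Sum>b\<in>UNIV. w $ a * w $ b * (X $ a $ j0 * X $ b $ j0))"
    by (simp add: power2_eq_square inner_vec_def column_def sum_product mult_ac)
  then show ?thesis by (simp add: hq_def sum_divide_distrib)
qed

lemma E_quot:
  fixes w :: "real^'m"
  shows "integrable M (\<lambda>\<omega>. (w \<bullet> column j0 (Om \<omega>))^2 / (column j0 (Om \<omega>) \<bullet> column j0 (Om \<omega>)))"
    and "integral\<^sup>L M (\<lambda>\<omega>. (w \<bullet> column j0 (Om \<omega>))^2 / (column j0 (Om \<omega>) \<bullet> column j0 (Om \<omega>))) = (w \<bullet> w) / real CARD('m)"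
proof -
  show "integrable M (\<lambda>\<omega>. (w \<bullet> column j0 (Om \<omega>))^2 / (column j0 (Om \<omega>) \<bullet> column j0 (Om \<omega>)))"
    unfolding quot_expand by (rule Bochner_Integration.integrable_sum, rule Bochner_Integration.integrable_sum, rule integrable_mult_right, rule hq_int)
  have "integral\<^sup>L M (\<lambda>\<omega>. (w \<bullet> column j0 (Om \<omega>))^2 / (column j0 (Om \<omega>) \<bullet> column j0 (Om \<omega>)))
      = (\<Sum>a\<in>UNIV. \<Sum>b\<in>UNIV. w $ a * w $ b * integral\<^sup>L M (\<lambda>\<omega>. hq j0 a b (Om \<omega>)))"
    unfolding quot_expand
    by (simp add: Bochner_Integration.integral_sum Bochner_Integration.integrable_sum integrable_mult_right hq_int)
  also have "\<dots> = (\<Sum>a\<in>UNIV. w $ a * w $ a * (1 / real CARD('m)))"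
  proof (rule sum.cong)
    fix a :: 'm
    have "(\<Sum>b\<in>UNIV. w $ a * w $ b * integral\<^sup>L M (\<lambda>\<omega>. hq j0 a b (Om \<omega>)))
        = (\<Sum>b\<in>UNIV. if b = a then w $ a * w $ a * (1 / real CARD('m)) else 0)"
      by (rule sum.cong) (auto simp: E_mix E_diag_val)
    then show "(\<Sum>b\<in>UNIV. w $ a * w $ b * integral\<^sup>L M (\<lambda>\<omega>. hq j0 a b (Om \<omega>))) = w $ a * w $ a * (1 / real CARD('m))"
      by simp
  qed simp
  also have "\<dots> = (w \<bullet> w) / real CARD('m)"
    by (simp add: inner_vec_def sum_divide_distrib)
  finally show "integral\<^sup>L M (\<lambda>\<omega>. (w \<bullet> column j0 (Om \<omega>))^2 / (column j0 (Om \<omega>) \<bullet> column j0 (Om \<omega>))) = (w \<bullet> w) / real CARD('m)" .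
qed

end

lemma minv_sym:
  fixes N :: "real^'n^'n"
  assumes inv: "invertible N" and sym: "transpose N = N"
  shows "transpose (matrix_inv N) = matrix_inv N"
proof -
  let ?B = "matrix_inv N"
  have 1: "N ** ?B = mat 1" and 2: "?B ** N = mat 1" using matrix_inv_props[OF inv] by auto
  have "transpose ?B ** N = mat 1"
  proof -
    have "transpose ?B ** N = transpose ?B ** transpose N" using sym by simp
    also have "\<dots> = transpose (N ** ?B)" by (simp add: matrix_transpose_mul)
    also have "\<dots> = mat 1" using 1 by (simp add: transpose_mat)
    finally show ?thesis .
  qed
  then have "transpose ?B = transpose ?B ** (N ** ?B)" using 1 by (simp add: matrix_mul_rid)
  also have "\<dots> = (transpose ?B ** N) ** ?B" by (simp add: matrix_mul_assoc)
  also have "\<dots> = ?B" using \<open>transpose ?B ** N = mat 1\<close> by (simp add: matrix_mul_lid)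
  finally show ?thesis .
qed

lemma proj_props:
  fixes Q :: "real^'l^'n"
  assumes inv: "invertible (transpose Q ** Q)"
  defines "P \<equiv> Q ** matrix_inv (transpose Q ** Q) ** transpose Q"
  shows "transpose P = P" "P ** P = P" "P ** Q = Q"
proof -
  let ?N = "transpose Q ** Q"
  let ?B = "matrix_inv ?N"
  have symN: "transpose ?N = ?N" by (simp add: matrix_transpose_mul)
  have symB: "transpose ?B = ?B" by (rule minv_sym[OF inv symN])
  have 2: "?B ** ?N = mat 1" using matrix_inv_props[OF inv] by auto
  show "transpose P = P" unfolding P_def by (simp add: matrix_transpose_mul symB matrix_mul_assoc)
  have "P ** P = Q ** (?B ** ?N) ** ?B ** transpose Q" unfolding P_def by (simp add: matrix_mul_assoc)
  also have "\<dots> = P" unfolding P_def 2 by (simp add: matrix_mul_rid)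
  finally show "P ** P = P" .
  have "P ** Q = Q ** (?B ** ?N)" unfolding P_def by (simp add: matrix_mul_assoc)
  also have "\<dots> = Q" unfolding 2 by (simp add: matrix_mul_rid)
  finally show "P ** Q = Q" .
qed

lemma mat_diff_mult: "(A - B) ** (C :: real^'c^'b) = A ** C - B ** (C :: real^'c^'b)"
  for A B :: "real^'b^'a"
  by (simp add: vec_eq_iff matrix_matrix_mult_def sum_subtractf algebra_simps)

lemma mat_mult_diff: "(A :: real^'b^'a) ** (B - C) = A ** B - A ** C"
  by (simp add: vec_eq_iff matrix_matrix_mult_def sum_subtractf algebra_simps)

lemma transpose_diff: "transpose ((A :: real^'b^'a) - B) = transpose A - transpose B"
  by (simp add: vec_eq_iff transpose_def)

lemma proj_T:
  fixes P :: "real^'n^'n"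
  assumes "transpose P = P" "P ** P = P"
  shows "orth_projector (mat 1 - P)"
  unfolding orth_projector_def
  using assms by (simp add: mat_diff_mult mat_mult_diff transpose_diff matrix_mul_lid matrix_mul_rid transpose_mat)

lemma proj_contract:
  fixes T :: "real^'n^'n"
  assumes "orth_projector T"
  shows "(T *v x) \<bullet> (T *v x) \<le> x \<bullet> x"
proof -
  have sT: "transpose T = T" and iT: "T ** T = T" using assms by (auto simp: orth_projector_def)
  have s: "sym_mat T" using sT by (simp add: sym_mat_def)
  have a: "(T *v x) \<bullet> (T *v x) = x \<bullet> (T *v x)"
    using sym_inner[OF s, of x "T *v x"] by (simp add: matrix_vector_mul_assoc iT inner_commute)
  define y where "y = x - T *v x"
  have xy: "x = T *v x + y" by (simp add: y_def)
  have o: "(T *v x) \<bullet> y = 0" using a by (simp add: y_def inner_diff_right inner_commute)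
  have "x \<bullet> x = (T *v x + y) \<bullet> (T *v x + y)" using xy by simp
  also have "\<dots> = (T *v x) \<bullet> (T *v x) + ((T *v x) \<bullet> y + y \<bullet> (T *v x)) + y \<bullet> y"
    by (simp add: inner_add_left inner_add_right)
  also have "(T *v x) \<bullet> y + y \<bullet> (T *v x) = 0" using o by (simp add: inner_commute)
  finally show ?thesis using inner_ge_zero[of y] by simp
qed

lemma proj_entry_bound:
  fixes T :: "real^'n^'n"
  assumes "orth_projector T"
  shows "\<bar>T $ i $ j\<bar> \<le> 1"
proof -
  let ?e = "axis j (1::real) :: real^'n"
  have "T $ i $ j = (T *v ?e) $ i" by (simp add: matrix_vector_mult_basis column_def)
  also have "\<bar>\<dots>\<bar> \<le> norm (T *v ?e)" by (rule component_le_norm_cart)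
  also have "\<dots> \<le> norm ?e"
    using proj_contract[OF assms, of ?e] by (simp add: norm_eq_sqrt_inner)
  also have "\<dots> = 1" by (rule norm_axis_1)
  finally show ?thesis .
qed

lemma proj_quad_bound:
  fixes P :: "real^'n^'n"
  assumes sP: "transpose P = P" and iP: "P ** P = P" and Px: "P *v x = x"
  shows "(v \<bullet> x)^2 / (x \<bullet> x) \<le> v \<bullet> (P *v v)"
proof -
  have s: "sym_mat P" using sP by (simp add: sym_mat_def)
  have q: "v \<bullet> (P *v v) = (P *v v) \<bullet> (P *v v)"
    using sym_inner[OF s, of v "P *v v"] by (simp add: matrix_vector_mul_assoc iP)
  have vx: "v \<bullet> x = (P *v v) \<bullet> x"
    using sym_inner[OF s, of v x] Px by simp
  show ?thesis
  proof (cases "x = 0")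
    case True then show ?thesis using q by simp
  next
    case False
    then have xp: "x \<bullet> x > 0" by simp
    have "(v \<bullet> x)^2 \<le> ((P *v v) \<bullet> (P *v v)) * (x \<bullet> x)"
      unfolding vx by (rule Cauchy_Schwarz_ineq)
    then show ?thesis using xp q by (simp add: divide_le_eq)
  qed
qed

lemma div_mono_aux:
  fixes u d D :: real
  assumes "d \<le> D" "d \<ge> 0" "d = 0 \<Longrightarrow> u = 0"
  shows "u^2 / D \<le> u^2 / d"
proof (cases "d = 0")
  case True then show ?thesis using assms by simp
next
  case False
  then have "d > 0" using assms by simp
  then show ?thesis using assms(1) by (intro divide_left_mono) auto
qed

lemma N_eq:
  fixes A :: "real^'n^'m" and S G :: "real^'n^'n" and Q :: "real^'l^'m"
  assumes sS: "transpose S = S" and SS: "S ** S = G"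
  shows "transpose Q ** A ** G ** transpose A ** Q = transpose (S ** transpose A ** Q) ** (S ** transpose A ** Q)"
  by (simp add: matrix_transpose_mul sS SS[symmetric] matrix_mul_assoc)

lemma That_eq:
  fixes A :: "real^'n^'m" and G :: "real^'n^'n" and Q :: "real^'l^'m"
  assumes sS: "transpose (mat_sqrt G) = mat_sqrt G" and SS: "mat_sqrt G ** mat_sqrt G = G"
  defines "X \<equiv> mat_sqrt G ** transpose A ** Q"
  shows "T_hat A G Q = mat 1 - X ** matrix_inv (transpose X ** X) ** transpose X"
proof -
  have N: "transpose Q ** A ** G ** transpose A ** Q = transpose X ** X"
    unfolding X_def by (rule N_eq[OF sS SS])
  have tX: "transpose X = transpose Q ** A ** mat_sqrt G"
    unfolding X_def by (simp add: matrix_transpose_mul sS matrix_mul_assoc)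
  show ?thesis unfolding T_hat_def N tX by (simp add: X_def matrix_mul_assoc)
qed

lemma mat_diff_mv: "((F :: real^'b^'a) - H) *v v = F *v v - H *v v"
  by (simp add: vec_eq_iff matrix_vector_mult_def sum_subtractf algebra_simps)

lemma mat_scale_mv: "((c::real) *\<^sub>R (F :: real^'b^'a)) *v v = c *\<^sub>R (F *v v)"
  by (simp add: vec_eq_iff matrix_vector_mult_def sum_distrib_left mult.assoc)

lemma transpose_scale: "transpose ((c::real) *\<^sub>R (F :: real^'b^'a)) = c *\<^sub>R transpose F"
  by (simp add: vec_eq_iff transpose_def)

lemma sym_entry: "transpose (T :: real^'a^'a) = T \<Longrightarrow> T $ j $ i = T $ i $ j"
proof -
  assume h: "transpose T = T"
  have "T $ j $ i = transpose T $ i $ j" by (simp add: transpose_def)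
  then show ?thesis using h by simp
qed

lemma quad_expand: "v \<bullet> ((F :: real^'a^'a) *v v) = (\<Sum>i\<in>UNIV. \<Sum>j\<in>UNIV. v $ i * v $ j * F $ i $ j)"
  by (simp add: inner_vec_def matrix_vector_mult_def sum_distrib_left mult_ac)

theorem mainTheorem6:
  fixes A :: "real^'n^'m" and G :: "real^'n^'n"
    and M :: "'s measure" and \<Omega> :: "'s \<Rightarrow> real^'l^'m"
  assumes "CARD('n) \<le> CARD('m)"
    and "rank A = CARD('n)"
    and "pd_mat G"
    and "CARD('l) \<le> CARD('n)"
    and "prob_space M"
    and "prob_space.indep_vars M (\<lambda>_. borel) (\<lambda>(i, j) \<omega>. \<Omega> \<omega> $ i $ j) UNIV"
    and "\<And>i j. distributed M lborel (\<lambda>\<omega>. \<Omega> \<omega> $ i $ j) std_normal_density"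
  shows "(AE \<omega> in M. invertible (transpose (\<Omega> \<omega>) ** A ** G ** transpose A ** \<Omega> \<omega>))
    \<and> (AE \<omega> in M. orth_projector (T_hat A G (\<Omega> \<omega>)))
    \<and> (\<forall>i j. integrable M (\<lambda>\<omega>. T_hat A G (\<Omega> \<omega>) $ i $ j))
    \<and> loewner_le (mat_expectation M (\<lambda>\<omega>. T_hat A G (\<Omega> \<omega>)))
         (mat 1 - (1 / (real CARD('m) * lambda_max (A ** G ** transpose A)))
                   *\<^sub>R (mat_sqrt G ** transpose A ** A ** mat_sqrt G))
    \<and> loewner_less
         (mat 1 - (1 / (real CARD('m) * lambda_max (A ** G ** transpose A)))
                   *\<^sub>R (mat_sqrt G ** transpose A ** A ** mat_sqrt G))
         (mat 1)"
proof -
  note rankA = assms(2) and pdG = assms(3) and cardl = assms(4)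
  interpret g: gauss M \<Omega>
    unfolding gauss_def gauss_axioms_def using assms(5,6,7) by blast
  define S where "S = mat_sqrt G"
  have psdG: "psd_mat G" unfolding psd_mat_def
  proof (intro conjI allI)
    show "sym_mat G" using pdG by (simp add: pd_mat_def)
    fix x :: "real^'n"
    show "0 \<le> x \<bullet> (G *v x)"
    proof (cases "x = 0")
      case False then show ?thesis using pdG by (auto simp: pd_mat_def intro: less_imp_le)
    qed simp
  qed
  have Sp: "psd_mat S" and SS: "S ** S = G" using mat_sqrt_props[OF psdG] by (auto simp: S_def)
  have sS: "transpose S = S" using Sp by (simp add: psd_mat_def sym_mat_def)
  have symS: "sym_mat S" using Sp by (simp add: psd_mat_def)
  have symG: "sym_mat G" using pdG by (simp add: pd_mat_def)
  have injA: "inj ((*v) A)" using rankA full_rank_injective by blast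
  have Sv0: "S *v v \<noteq> 0" if "v \<noteq> 0" for v
  proof
    assume "S *v v = 0"
    then have "G *v v = 0" by (simp add: SS[symmetric] matrix_vector_mul_assoc[symmetric])
    then have "v \<bullet> (G *v v) = 0" by simp
    with pdG that show False by (auto simp: pd_mat_def)
  qed
  have ASv0: "A *v (S *v v) \<noteq> 0" if "v \<noteq> 0" for v
  proof
    assume "A *v (S *v v) = 0"
    then have "A *v (S *v v) = A *v 0" by simp
    with injA have "S *v v = 0" by (meson injD)
    with Sv0[OF that] show False by simp
  qed
  define C where "C = S ** transpose A"
  have tC: "transpose C = A ** S" by (simp add: C_def matrix_transpose_mul sS)
  have injC: "inj ((*v) (transpose C))"
  proof (rule linear_injective_0[OF matrix_vector_mul_linear, THEN iffD2], intro allI impI)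
    fix v assume "transpose C *v v = 0"
    then have "A *v (S *v v) = 0" by (simp add: tC matrix_vector_mul_assoc[symmetric])
    then show "v = 0" using ASv0 by blast
  qed
  define Nm where "Nm \<omega> = transpose (\<Omega> \<omega>) ** A ** G ** transpose A ** \<Omega> \<omega>" for \<omega>
  define X where "X \<omega> = C ** \<Omega> \<omega>" for \<omega>
  have NX: "Nm \<omega> = transpose (X \<omega>) ** X \<omega>" for \<omega>
    unfolding Nm_def X_def C_def by (rule N_eq[OF sS SS])
  define P where "P \<omega> = X \<omega> ** matrix_inv (transpose (X \<omega>) ** X \<omega>) ** transpose (X \<omega>)" for \<omega>
  have TP: "T_hat A G (\<Omega> \<omega>) = mat 1 - P \<omega>" for \<omega>
    unfolding P_def X_def C_def using That_eq[of G A "\<Omega> \<omega>"] sS SS by (simp add: S_def)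
  have AEinv: "AE \<omega> in M. invertible (transpose (X \<omega>) ** X \<omega>)"
    using g.li_all[OF injC cardl] by eventually_elim (simp add: X_def g.li_invertible)
  have part1: "AE \<omega> in M. invertible (transpose (\<Omega> \<omega>) ** A ** G ** transpose A ** \<Omega> \<omega>)"
    using AEinv by eventually_elim (simp add: NX[unfolded Nm_def])
  have AEproj: "AE \<omega> in M. orth_projector (T_hat A G (\<Omega> \<omega>))"
    using AEinv by eventually_elim (auto simp: TP P_def intro!: proj_T proj_props)
  have emT: "em M (\<lambda>\<omega>. T_hat A G (\<Omega> \<omega>))"
    unfolding T_hat_def
    by (intro em_diff em_const em_mult em_transpose em_inv g.Om_em)
  have Tm: "(\<lambda>\<omega>. T_hat A G (\<Omega> \<omega>) $ i $ j) \<in> borel_measurable M" for i j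
    using emT by (simp add: em_def)
  have intT: "integrable M (\<lambda>\<omega>. T_hat A G (\<Omega> \<omega>) $ i $ j)" for i j
  proof (rule g.integrable_const_bound[where B=1])
    show "AE x in M. norm (T_hat A G (\<Omega> x) $ i $ j) \<le> 1"
      using AEproj by eventually_elim (simp add: proj_entry_bound)
  qed (rule Tm)
  define K where "K = A ** G ** transpose A"
  define lam where "lam = lambda_max K"
  have sG: "transpose G = G" using symG by (simp add: sym_mat_def)
  have symK: "sym_mat K" by (simp add: sym_mat_def K_def matrix_transpose_mul sG matrix_mul_assoc)
  have Kb: "x \<bullet> (K *v x) \<le> lam * (x \<bullet> x)" for x unfolding lam_def by (rule lambda_max_bound[OF symK])
  have Kq: "x \<bullet> (K *v x) = (transpose A *v x) \<bullet> (G *v (transpose A *v x))" for x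
    using inner_mat_swap[of x A "G *v (transpose A *v x)"]
    by (simp add: K_def matrix_vector_mul_assoc[symmetric])
  have lam0: "lam > 0"
  proof -
    define v0 where "v0 = (axis undefined 1 :: real^'n)"
    have v00: "v0 \<noteq> 0" by (simp add: v0_def axis_eq_0_iff)
    define y where "y = A *v v0"
    have y0: "y \<noteq> 0"
    proof
      assume "y = 0"
      then have "A *v v0 = A *v 0" by (simp add: y_def)
      with injA have "v0 = 0" by (meson injD)
      with v00 show False by simp
    qed
    have "v0 \<bullet> (transpose A *v y) = y \<bullet> y"
      using inner_mat_swap[of v0 "transpose A" y] by (simp add: y_def)
    then have z0: "transpose A *v y \<noteq> 0" using y0 by auto
    have "0 < (transpose A *v y) \<bullet> (G *v (transpose A *v y))" using pdG z0 by (simp add: pd_mat_def)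
    also have "\<dots> = y \<bullet> (K *v y)" by (simp add: Kq)
    also have "\<dots> \<le> lam * (y \<bullet> y)" by (rule Kb)
    finally have "0 < lam * (y \<bullet> y)" .
    moreover have "y \<bullet> y > 0" using y0 by simp
    ultimately show ?thesis by (simp add: zero_less_mult_iff)
  qed
  define m where "m = real CARD('m)"
  have m0: "m > 0" by (simp add: m_def)
  define c where "c = 1 / (m * lam)"
  have c0: "c > 0" using m0 lam0 by (simp add: c_def)
  define H where "H = mat_sqrt G ** transpose A ** A ** mat_sqrt G"
  have HS: "H = S ** transpose A ** A ** S" by (simp add: H_def S_def)
  have sH: "transpose H = H" by (simp add: HS matrix_transpose_mul sS matrix_mul_assoc)
  have vHv: "v \<bullet> (H *v v) = (A *v (S *v v)) \<bullet> (A *v (S *v v))" for v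
  proof -
    have "H *v v = S *v (transpose A *v (A *v (S *v v)))" by (simp add: HS matrix_vector_mul_assoc matrix_mul_assoc)
    then have "v \<bullet> (H *v v) = (S *v v) \<bullet> (transpose A *v (A *v (S *v v)))"
      using sym_inner[OF symS, of v] by simp
    also have "\<dots> = (A *v (S *v v)) \<bullet> (A *v (S *v v))"
      using inner_mat_swap[of "S *v v" "transpose A" "A *v (S *v v)"] by simp
    finally show ?thesis .
  qed
  define R where "R = mat 1 - c *\<^sub>R H"
  have part5: "loewner_less R (mat 1)"
    unfolding loewner_less_def pd_mat_def
  proof (intro conjI allI impI)
    have e: "mat 1 - R = c *\<^sub>R H" by (simp add: R_def)
    show "sym_mat (mat 1 - R)" unfolding e sym_mat_def transpose_scale sH ..
    fix v :: "real^'n" assume v: "v \<noteq> 0"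
    have "0 < c * ((A *v (S *v v)) \<bullet> (A *v (S *v v)))" using c0 ASv0[OF v] by simp
    also have "\<dots> = v \<bullet> ((mat 1 - R) *v v)" unfolding e mat_scale_mv by (simp add: vHv)
    finally show "0 < v \<bullet> ((mat 1 - R) *v v)" .
  qed
  define j0 where "j0 = (undefined :: 'l)"
  define E where "E = mat_expectation M (\<lambda>\<omega>. T_hat A G (\<Omega> \<omega>))"
  have Eij: "E $ i $ j = integral\<^sup>L M (\<lambda>\<omega>. T_hat A G (\<Omega> \<omega>) $ i $ j)" for i j
    by (simp add: E_def mat_expectation_def)
  have symE: "transpose E = E"
  proof -
    have "E $ j $ i = E $ i $ j" for i j
      unfolding Eij
    proof (rule integral_cong_AE[OF Tm Tm])
      show "AE x in M. T_hat A G (\<Omega> x) $ j $ i = T_hat A G (\<Omega> x) $ i $ j"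
        using AEproj by eventually_elim (rule sym_entry, simp add: orth_projector_def)
    qed
    then show ?thesis by (simp add: vec_eq_iff transpose_def)
  qed
  have sR: "transpose R = R" by (simp add: R_def transpose_diff transpose_scale sH transpose_mat)
  have vRv: "v \<bullet> (R *v v) = v \<bullet> v - (A *v (S *v v)) \<bullet> (A *v (S *v v)) / (m * lam)" for v
    by (simp add: R_def mat_diff_mv mat_scale_mv vHv c_def inner_diff_right)
  have vEv: "v \<bullet> (E *v v) = integral\<^sup>L M (\<lambda>\<omega>. v \<bullet> (T_hat A G (\<Omega> \<omega>) *v v))" for v
  proof -
    have "v \<bullet> (E *v v) = (\<Sum>i\<in>UNIV. \<Sum>j\<in>UNIV. v $ i * v $ j * integral\<^sup>L M (\<lambda>\<omega>. T_hat A G (\<Omega> \<omega>) $ i $ j))"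
      by (simp add: quad_expand Eij)
    also have "\<dots> = integral\<^sup>L M (\<lambda>\<omega>. \<Sum>i\<in>UNIV. \<Sum>j\<in>UNIV. v $ i * v $ j * T_hat A G (\<Omega> \<omega>) $ i $ j)"
      by (simp add: Bochner_Integration.integral_sum Bochner_Integration.integrable_sum intT)
    also have "\<dots> = integral\<^sup>L M (\<lambda>\<omega>. v \<bullet> (T_hat A G (\<Omega> \<omega>) *v v))"
      by (simp add: quad_expand)
    finally show ?thesis .
  qed
  have intQ: "integrable M (\<lambda>\<omega>. v \<bullet> (T_hat A G (\<Omega> \<omega>) *v v))" for v
    unfolding quad_expand
    by (rule Bochner_Integration.integrable_sum, rule Bochner_Integration.integrable_sum,
        rule integrable_mult_right, rule intT)
  have ptw: "AE \<omega> in M. v \<bullet> (T_hat A G (\<Omega> \<omega>) *v v) \<le>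
      v \<bullet> v - (1 / lam) * (((A *v (S *v v)) \<bullet> column j0 (\<Omega> \<omega>))^2 / (column j0 (\<Omega> \<omega>) \<bullet> column j0 (\<Omega> \<omega>)))" for v
    using AEinv
  proof eventually_elim
    case (elim \<omega>)
    define g where "g = column j0 (\<Omega> \<omega>)"
    define w where "w = A *v (S *v v)"
    define x where "x = column j0 (X \<omega>)"
    have pp: "transpose (P \<omega>) = P \<omega>" "P \<omega> ** P \<omega> = P \<omega>" "P \<omega> ** X \<omega> = X \<omega>"
      unfolding P_def using proj_props[OF elim] by auto
    have Px: "P \<omega> *v x = x"
      unfolding x_def using pp(3) col_mult[of j0 "P \<omega>" "X \<omega>"] by simp
    have q1: "(v \<bullet> x)^2 / (x \<bullet> x) \<le> v \<bullet> (P \<omega> *v v)" by (rule proj_quad_bound[OF pp(1,2) Px])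
    have "x = (S ** transpose A) *v g" by (simp add: x_def g_def X_def C_def col_mult)
    also have "\<dots> = S *v (transpose A *v g)" by (rule matrix_vector_mul_assoc[symmetric])
    finally have xg: "x = S *v (transpose A *v g)" .
    have vx: "v \<bullet> x = w \<bullet> g"
    proof -
      have "v \<bullet> x = (S *v v) \<bullet> (transpose A *v g)" unfolding xg by (rule sym_inner[OF symS])
      also have "\<dots> = w \<bullet> g" using inner_mat_swap[of "S *v v" "transpose A" g] by (simp add: w_def)
      finally show ?thesis .
    qed
    have xx: "x \<bullet> x = g \<bullet> (K *v g)"
    proof -
      have "x \<bullet> x = (transpose A *v g) \<bullet> (S *v (S *v (transpose A *v g)))"
        unfolding xg using sym_inner[OF symS, of "transpose A *v g" "S *v (transpose A *v g)"] by simp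
      also have "\<dots> = (transpose A *v g) \<bullet> (G *v (transpose A *v g))"
        by (simp add: matrix_vector_mul_assoc SS)
      also have "\<dots> = g \<bullet> (K *v g)" by (simp add: Kq)
      finally show ?thesis .
    qed
    have q2: "(w \<bullet> g)^2 / (lam * (g \<bullet> g)) \<le> (w \<bullet> g)^2 / (x \<bullet> x)"
    proof (rule div_mono_aux)
      show "x \<bullet> x \<le> lam * (g \<bullet> g)" unfolding xx by (rule Kb)
      show "0 \<le> x \<bullet> x" by simp
      show "w \<bullet> g = 0" if "x \<bullet> x = 0" using that vx by simp
    qed
    have TPv: "v \<bullet> (T_hat A G (\<Omega> \<omega>) *v v) = v \<bullet> v - v \<bullet> (P \<omega> *v v)"
      by (simp add: TP mat_diff_mv inner_diff_right)
    have "(w \<bullet> g)^2 / (lam * (g \<bullet> g)) = (1 / lam) * ((w \<bullet> g)^2 / (g \<bullet> g))" by simp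
    then show ?case using q1 q2 TPv vx by (simp add: w_def g_def)
  qed
  have part4: "loewner_le E R"
    unfolding loewner_le_def psd_mat_def
  proof (intro conjI allI)
    show "sym_mat (R - E)" by (simp add: sym_mat_def transpose_diff sR symE)
    fix v :: "real^'n"
    define w where "w = A *v (S *v v)"
    define q where "q \<omega> = (w \<bullet> column j0 (\<Omega> \<omega>))^2 / (column j0 (\<Omega> \<omega>) \<bullet> column j0 (\<Omega> \<omega>))" for \<omega>
    have iq: "integrable M q" unfolding q_def[abs_def] by (rule g.E_quot(1))
    have Eq: "integral\<^sup>L M q = (w \<bullet> w) / m" unfolding q_def[abs_def] m_def by (rule g.E_quot(2))
    have ptw': "AE \<omega> in M. v \<bullet> (T_hat A G (\<Omega> \<omega>) *v v) \<le> v \<bullet> v - (1 / lam) * q \<omega>"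
      using ptw[of v] by (simp only: q_def w_def)
    have ic: "integrable M (\<lambda>\<omega>. v \<bullet> v)" by simp
    have iq2: "integrable M (\<lambda>\<omega>. (1 / lam) * q \<omega>)" by (rule integrable_mult_right[OF iq])
    have "v \<bullet> (E *v v) = integral\<^sup>L M (\<lambda>\<omega>. v \<bullet> (T_hat A G (\<Omega> \<omega>) *v v))" by (rule vEv)
    also have "\<dots> \<le> integral\<^sup>L M (\<lambda>\<omega>. v \<bullet> v - (1 / lam) * q \<omega>)"
      by (rule integral_mono_AE[OF intQ Bochner_Integration.integrable_diff[OF ic iq2] ptw'])
    also have "\<dots> = integral\<^sup>L M (\<lambda>\<omega>. v \<bullet> v) - integral\<^sup>L M (\<lambda>\<omega>. (1 / lam) * q \<omega>)"
      by (rule Bochner_Integration.integral_diff[OF ic iq2])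
    also have "integral\<^sup>L M (\<lambda>\<omega>. (1 / lam) * q \<omega>) = (1 / lam) * integral\<^sup>L M q"
      by (rule integral_mult_right_zero)
    also have "integral\<^sup>L M (\<lambda>\<omega>. v \<bullet> v) = v \<bullet> v" using g.prob_space by simp
    also have "v \<bullet> v - (1 / lam) * integral\<^sup>L M q = v \<bullet> v - (1 / lam) * ((w \<bullet> w) / m)" by (simp only: Eq)
    also have "\<dots> = v \<bullet> (R *v v)" by (simp add: vRv w_def)
    finally have "v \<bullet> (E *v v) \<le> v \<bullet> (R *v v)" .
    then show "0 \<le> v \<bullet> ((R - E) *v v)" by (simp add: mat_diff_mv inner_diff_right)
  qed
  have p4: "loewner_le (mat_expectation M (\<lambda>\<omega>. T_hat A G (\<Omega> \<omega>)))
         (mat 1 - (1 / (real CARD('m) * lambda_max (A ** G ** transpose A)))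
                   *\<^sub>R (mat_sqrt G ** transpose A ** A ** mat_sqrt G))"
    using part4 unfolding E_def R_def c_def H_def m_def lam_def K_def .
  have p5: "loewner_less
         (mat 1 - (1 / (real CARD('m) * lambda_max (A ** G ** transpose A)))
                   *\<^sub>R (mat_sqrt G ** transpose A ** A ** mat_sqrt G))
         (mat 1)"
    using part5 unfolding R_def c_def H_def m_def lam_def K_def .
  have p3: "\<forall>i j. integrable M (\<lambda>\<omega>. T_hat A G (\<Omega> \<omega>) $ i $ j)" using intT by blast
  show ?thesis using part1 AEproj p3 p4 p5 by (intro conjI)
qed

end
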